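(* Let $X$ and $R$ be finite sets, $\mathcal F$ a finite family of functions $f:X\to\{0,1\}$, $\mathcal D$ a probability distribution on $\mathcal F$ assigning probability $P_f$ to $f$, and $G:\mathcal F\times R\to X$ a heuristic. For $f\in\mathcal F$ let $h_f=|\{r\in R: f(G(f,r))=1\}|$, and assume $h_f>0$ whenever $P_f>0$. Let $T=\sum_{f\in\mathcal F}P_f\,|R|/h_f$ be the expected number of evaluations of $r\mapsto f(G(f,r))$ used by the classical procedure that repeatedly picks a uniformly random seed $r\in R$ until $f(G(f,r))=1$, for $f$ drawn from $\mathcal D$. Then there is a quantum algorithm that, for $f$ drawn from $\mathcal D$, finds $x_0\in X$ with $f(x_0)=1$ using an expected number (over $\mathcal D$ and the algorithm's randomness) of evaluations of $r\mapsto f(G(f,r))$ that is in $O(\sqrt T)$.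
   Context: Evaluations of $r\mapsto f(G(f,r))$ by the quantum algorithm may be made in superposition (as the reversible/unitary implementation of this Boolean function on the seed register). *)

theory Defs
  imports "HOL-Probability.Probability"
begin

text \<open>A minimal model of quantum query algorithms with classical (randomised) control.
  The quantum register has computational basis states (r, b, w): a seed r, a query
  target bit b, and a workspace index w < m.\<close>

type_synonym basis = "nat \<times> bool \<times> nat"
type_synonym qvec = "basis \<Rightarrow> complex"
type_synonym qop = "basis \<Rightarrow> basis \<Rightarrow> complex"

text \<open>A circuit: initial (normalised) state, followed by k blocks "query gate, then unitary";
  it uses exactly k queries and ends with a full computational-basis measurement.\<close>
type_synonym circuit = "qvec \<times> qop list"

datatype action = Halt nat | Run circuit

text \<open>Histories are stored most-recent-first: a list of (circuit run, measurement outcome).\<close>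
type_synonym history = "(circuit \<times> basis) list"

definition qcarrier :: "nat set \<Rightarrow> nat \<Rightarrow> basis set" where
  "qcarrier R m = R \<times> UNIV \<times> {..<m}"

definition apply_op :: "basis set \<Rightarrow> qop \<Rightarrow> qvec \<Rightarrow> qvec" where
  "apply_op S U v = (\<lambda>i. if i \<in> S then (\<Sum>j\<in>S. U i j * v j) else 0)"

definition query_gate :: "(nat \<Rightarrow> bool) \<Rightarrow> qvec \<Rightarrow> qvec" where
  "query_gate g v = (\<lambda>(r, b, w). v (r, b \<noteq> g r, w))"

definition unitary_on :: "basis set \<Rightarrow> qop \<Rightarrow> bool" where
  "unitary_on S U \<longleftrightarrow>
     (\<forall>i\<in>S. \<forall>j\<in>S. (\<Sum>k\<in>S. cnj (U k i) * U k j) = (if i = j then 1 else 0))"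

definition valid_circuit :: "basis set \<Rightarrow> circuit \<Rightarrow> bool" where
  "valid_circuit S c \<longleftrightarrow>
     (\<forall>i. i \<notin> S \<longrightarrow> fst c i = 0) \<and> (\<Sum>i\<in>S. (cmod (fst c i))\<^sup>2) = 1 \<and>
     (\<forall>U\<in>set (snd c). unitary_on S U)"

fun final_state :: "basis set \<Rightarrow> (nat \<Rightarrow> bool) \<Rightarrow> qvec \<Rightarrow> qop list \<Rightarrow> qvec" where
  "final_state S g v [] = v"
| "final_state S g v (U # Us) = final_state S g (apply_op S U (query_gate g v)) Us"

definition queries :: "circuit \<Rightarrow> nat" where
  "queries c = length (snd c)"

definition outcome_prob :: "basis set \<Rightarrow> (nat \<Rightarrow> bool) \<Rightarrow> circuit \<Rightarrow> basis \<Rightarrow> real" where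
  "outcome_prob S g c out = (cmod (final_state S g (fst c) (snd c) out))\<^sup>2"

type_synonym strategy = "history \<Rightarrow> action pmf"

definition valid_strategy :: "basis set \<Rightarrow> strategy \<Rightarrow> bool" where
  "valid_strategy S \<sigma> \<longleftrightarrow> (\<forall>h c. pmf (\<sigma> h) (Run c) > 0 \<longrightarrow> valid_circuit S c)"

fun hist_prob :: "basis set \<Rightarrow> (nat \<Rightarrow> bool) \<Rightarrow> strategy \<Rightarrow> history \<Rightarrow> real" where
  "hist_prob S g \<sigma> [] = 1"
| "hist_prob S g \<sigma> ((c, out) # h) = hist_prob S g \<sigma> h * pmf (\<sigma> h) (Run c) * outcome_prob S g c out"

definition halt_prob :: "basis set \<Rightarrow> (nat \<Rightarrow> bool) \<Rightarrow> strategy \<Rightarrow> history \<Rightarrow> nat \<Rightarrow> real" where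
  "halt_prob S g \<sigma> h r = hist_prob S g \<sigma> h * pmf (\<sigma> h) (Halt r)"

definition hist_cost :: "history \<Rightarrow> nat" where
  "hist_cost h = sum_list (map (\<lambda>(c, out). queries c) h)"

text \<open>The algorithm halts with probability 1, and whenever it halts it outputs a seed r
  in R with g r (i.e. the found element is x0 = G(f,r) with f x0 = 1).\<close>
definition finds :: "nat set \<Rightarrow> basis set \<Rightarrow> (nat \<Rightarrow> bool) \<Rightarrow> strategy \<Rightarrow> bool" where
  "finds R S g \<sigma> \<longleftrightarrow>
     (\<integral>\<^sup>+ hr. ennreal (halt_prob S g \<sigma> (fst hr) (snd hr)) \<partial>count_space UNIV) = 1 \<and>
     (\<forall>h r. halt_prob S g \<sigma> h r > 0 \<longrightarrow> r \<in> R \<and> g r)"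

definition expected_queries :: "basis set \<Rightarrow> (nat \<Rightarrow> bool) \<Rightarrow> strategy \<Rightarrow> ennreal" where
  "expected_queries S g \<sigma> =
     (\<integral>\<^sup>+ hr. ennreal (halt_prob S g \<sigma> (fst hr) (snd hr) * real (hist_cost (fst hr))) \<partial>count_space UNIV)"

end

theory Submission
  imports Defs "HOL-Probability.Probability"
begin


lemma cos_sum_tele:
  fixes a :: real
  shows "2 * sin a * (\<Sum>j<M. cos ((2 * real j + 1) * a)) = sin (2 * real M * a)"
proof (induction M)
  case 0 then show ?case by simp
next
  case (Suc M)
  have pp: "2 * sin a * cos b = sin (b + a) - sin (b - a)" for b
    by (simp add: sin_add sin_diff)
  have "2 * sin a * cos ((2 * real M + 1) * a) = sin ((2 * real M + 1) * a + a) - sin ((2 * real M + 1) * a - a)"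
    by (rule pp)
  moreover have "(2 * real M + 1) * a + a = 2 * real (Suc M) * a" by (simp add: algebra_simps)
  moreover have "(2 * real M + 1) * a - a = 2 * real M * a" by (simp add: algebra_simps)
  ultimately have "2 * sin a * cos ((2 * real M + 1) * a) = sin (2 * real (Suc M) * a) - sin (2 * real M * a)"
    by simp
  then show ?case using Suc by (simp add: distrib_left del: of_nat_Suc)
qed

definition psum :: "real \<Rightarrow> nat \<Rightarrow> real" where
  "psum \<theta> M = (\<Sum>j<M. (sin ((2 * real j + 1) * \<theta>))\<^sup>2)"

lemma psum_formula:
  assumes "sin (2 * \<theta>) \<noteq> 0"
  shows "psum \<theta> M = real M / 2 - sin (4 * real M * \<theta>) / (4 * sin (2 * \<theta>))"
proof -
  have sq: "(sin x)\<^sup>2 = (1 - cos (2 * x)) / 2" for x :: real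
    by (simp add: cos_double_sin)
  have "psum \<theta> M = (\<Sum>j<M. (1 - cos ((2 * real j + 1) * (2 * \<theta>))) / 2)"
    unfolding psum_def by (intro sum.cong refl) (simp add: sq algebra_simps)
  also have "\<dots> = real M / 2 - (\<Sum>j<M. cos ((2 * real j + 1) * (2 * \<theta>))) / 2"
    by (simp add: sum_divide_distrib[symmetric] sum_subtractf)
  also have "(\<Sum>j<M. cos ((2 * real j + 1) * (2 * \<theta>))) = sin (4 * real M * \<theta>) / (2 * sin (2 * \<theta>))"
    using cos_sum_tele[of "2 * \<theta>" M] assms by (simp add: field_simps)
  finally show ?thesis by simp
qed

lemma psum_nonneg: "0 \<le> psum \<theta> M" unfolding psum_def by (simp add: sum_nonneg)

lemma psum_le: "psum \<theta> M \<le> real M"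
proof -
  have "psum \<theta> M \<le> (\<Sum>j<M. 1)" unfolding psum_def
    by (intro sum_mono) (simp add: abs_sin_le_one abs_square_le_1)
  then show ?thesis by simp
qed

lemma sin_lower: fixes x :: real assumes "0 \<le> x" "x \<le> 4/3" shows "x * (7/10) \<le> sin x"
proof -
  have "\<bar>sin x - (\<Sum>m<3. sin_coeff m * x ^ m)\<bar> \<le> inverse (fact 3) * \<bar>x\<bar> ^ 3"
    by (rule Maclaurin_sin_bound)
  moreover have "(\<Sum>m<3. sin_coeff m * x ^ m) = x"
    by (simp add: sin_coeff_def numeral_3_eq_3 lessThan_Suc)
  ultimately have "x - x^3/6 \<le> sin x" using assms by (simp add: fact_numeral abs_if field_simps split: if_splits)
  moreover have "x^3 \<le> x * (16/9)"
  proof -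
    have "x * x \<le> (4/3) * (4/3)" using assms by (intro mult_mono) auto
    then have "x * (x * x) \<le> x * (16/9)" using assms by (intro mult_left_mono) auto
    then show ?thesis by (simp add: power3_eq_cube)
  qed
  ultimately show ?thesis using assms by linarith
qed

lemma psum_bound:
  assumes th: "0 < \<theta>" "\<theta> \<le> pi/2" and M: "1 \<le> real M * sin \<theta>"
  shows "real M / 4 \<le> psum \<theta> M"
proof (cases "\<theta> = pi/2")
  case True
  have "(sin ((2 * real j + 1) * \<theta>))\<^sup>2 = 1" for j
  proof -
    have "(2 * real j + 1) * \<theta> = real j * pi + pi/2" unfolding True by (simp add: algebra_simps)
    then have "cos ((2 * real j + 1) * \<theta>) = cos (real j * pi + pi/2)" by simp
    also have "\<dots> = 0" by (simp add: cos_add sin_npi)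
    finally show ?thesis using sin_cos_squared_add[of "(2 * real j + 1) * \<theta>"] by simp
  qed
  then have "psum \<theta> M = real M" unfolding psum_def by simp
  then show ?thesis by simp
next
  case False
  then have th2: "\<theta> < pi/2" using th by simp
  have s2: "0 < sin (2 * \<theta>)" using th th2 by (intro sin_gt_zero) auto
  have sth: "0 < sin \<theta>" using th th2 by (intro sin_gt_zero) auto
  have Mpos: "0 < real M" 
  proof (rule ccontr)
    assume "\<not> 0 < real M" then have "M = 0" by simp
    then show False using M by simp
  qed
  note pf = psum_formula[of \<theta> M] s2
  show ?thesis
  proof (cases "\<theta> \<le> pi/3")
    case True
    have "cos (pi/3) \<le> cos \<theta>" using th True by (intro cos_monotone_0_pi_le) auto
    then have c: "1/2 \<le> cos \<theta>" by (simp add: cos_60)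
    have "sin \<theta> \<le> sin (2 * \<theta>)" 
    proof -
      have "sin \<theta> * 1 \<le> sin \<theta> * (2 * cos \<theta>)" using c sth by (intro mult_left_mono) auto
      then show ?thesis by (simp add: sin_double)
    qed
    then have "1 \<le> real M * sin (2 * \<theta>)" using M Mpos by (meson dual_order.trans mult_left_mono of_nat_0_le_iff)
    then have "1 / (4 * sin (2 * \<theta>)) \<le> real M / 4" using s2 by (simp add: field_simps)
    moreover have "sin (4 * real M * \<theta>) / (4 * sin (2 * \<theta>)) \<le> 1 / (4 * sin (2 * \<theta>))"
      using s2 by (intro divide_right_mono) auto
    ultimately show ?thesis using pf by simp
  next
    case False
    define e where "e = pi/2 - \<theta>"
    have e: "0 < e" "e < pi/6" using False th2 by (auto simp: e_def)
    have "sin (4 * real M * \<theta>) = sin (real (2*M) * pi - 4 * real M * e)"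
      by (simp add: e_def algebra_simps)
    also have "\<dots> = - sin (4 * real M * e)" 
    proof -
      have "cos (real (2*M) * pi) = 1" by (simp only: cos_npi) simp
      then show ?thesis by (simp add: sin_diff sin_npi del: of_nat_mult)
    qed
    finally have A: "sin (4 * real M * \<theta>) = - sin (4 * real M * e)" .
    have "sin (2 * \<theta>) = sin (pi - 2 * e)" by (simp add: e_def algebra_simps)
    then have B: "sin (2 * \<theta>) = sin (2 * e)" by simp
    have ps: "psum \<theta> M = real M / 2 + sin (4 * real M * e) / (4 * sin (2 * e))"
      using pf A B by simp
    have s2e: "0 < sin (2 * e)" using s2 B by simp
    show ?thesis
    proof (cases "4 * real M * e \<le> pi")
      case True
      then have "0 \<le> sin (4 * real M * e)" using e by (intro sin_ge_zero) auto
      then show ?thesis using ps s2e by simp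
    next
      case False
      have "2 * e \<le> 4/3" using e pi_less_4 by simp
      then have "2 * e * (7/10) \<le> sin (2 * e)" using e by (intro sin_lower) auto
      moreover have "pi < 4 * real M * e" using False by simp
      ultimately have "3 < 4 * real M * e" using pi_gt3 by linarith
      then have "e * real M > 3/4" by (simp add: algebra_simps)
      moreover have "real M * (2 * e * (7/10)) * 4 = (28/5) * (e * real M)" by (simp add: algebra_simps)
      ultimately have "real M * (2 * e * (7/10)) * 4 \<ge> 4" by linarith
      then have "real M * sin (2 * e) * 4 \<ge> 4"
        using \<open>2 * e * (7/10) \<le> sin (2 * e)\<close> Mpos
        by (smt (verit, ccfv_SIG) mult_left_mono mult_right_mono)
      then have "1 / (4 * sin (2 * e)) \<le> real M / 4" using s2e by (simp add: field_simps)
      moreover have "-1 / (4 * sin (2 * e)) \<le> sin (4 * real M * e) / (4 * sin (2 * e))"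
        using s2e by (intro divide_right_mono) auto
      ultimately show ?thesis using ps by simp
    qed
  qed
qed



lemma qcarrier1_mem[simp]: "((r, b, w) \<in> qcarrier R (Suc 0)) \<longleftrightarrow> r \<in> R \<and> w = 0"
  by (auto simp: qcarrier_def)

lemma sum_qcarrier1:
  assumes "finite R"
  shows "(\<Sum>i\<in>qcarrier R (Suc 0). f i) = (\<Sum>r\<in>R. f (r, False, 0) + f (r, True, 0))"
proof -
  have e: "qcarrier R (Suc 0) = (\<lambda>(r, b). (r, b, 0)) ` (R \<times> UNIV)"
    by (auto simp: qcarrier_def image_iff)
  have inj: "inj_on (\<lambda>(r, b). (r, b, 0::nat)) (R \<times> (UNIV::bool set))"
    by (auto simp: inj_on_def)
  have "(\<Sum>i\<in>qcarrier R (Suc 0). f i) = (\<Sum>(r,b)\<in>R \<times> UNIV. f (r, b, 0))"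
    unfolding e by (subst sum.reindex[OF inj]) (simp add: case_prod_beta')
  also have "\<dots> = (\<Sum>r\<in>R. \<Sum>b\<in>UNIV. f (r, b, 0))"
    by (simp add: sum.cartesian_product)
  also have "\<dots> = (\<Sum>r\<in>R. f (r, False, 0) + f (r, True, 0))"
    by (simp add: UNIV_bool add.commute)
  finally show ?thesis .
qed

definition sgnb :: "bool \<Rightarrow> real" where "sgnb b = (if b then -1 else 1) / sqrt 2"
definition amp :: "(nat \<Rightarrow> bool) \<Rightarrow> real \<Rightarrow> real \<Rightarrow> nat \<Rightarrow> real" where
  "amp g a b r = (if g r then a else b)"
definition psr :: "nat set \<Rightarrow> (nat \<Rightarrow> bool) \<Rightarrow> real \<Rightarrow> real \<Rightarrow> basis \<Rightarrow> real" where
  "psr R g a b = (\<lambda>(r, bb, w). if r \<in> R \<and> w = 0 then amp g a b r * sgnb bb else 0)"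
definition initr :: "nat set \<Rightarrow> basis \<Rightarrow> real" where
  "initr R = (\<lambda>(r, bb, w). if r \<in> R \<and> w = 0 then sgnb bb / sqrt (real (card R)) else 0)"
definition Dr :: "nat set \<Rightarrow> basis \<Rightarrow> basis \<Rightarrow> real" where
  "Dr R = (\<lambda>(r, b, w) (r', b', w'). if b = b' \<and> w = w' then 2 / real (card R) - (if r = r' then 1 else 0) else 0)"
definition hh :: "bool \<Rightarrow> bool \<Rightarrow> real" where "hh b b' = (if b \<and> b' then -1 else 1) / sqrt 2"
definition Hr :: "basis \<Rightarrow> basis \<Rightarrow> real" where
  "Hr = (\<lambda>(r, b, w) (r', b', w'). if r = r' \<and> w = w' then hh b b' else 0)"
definition Ir :: "basis \<Rightarrow> basis \<Rightarrow> real" where "Ir i j = (if i = j then 1 else 0)"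
definition cop :: "(basis \<Rightarrow> basis \<Rightarrow> real) \<Rightarrow> qop" where "cop U i j = complex_of_real (U i j)"
definition cv :: "(basis \<Rightarrow> real) \<Rightarrow> qvec" where "cv v i = complex_of_real (v i)"
definition circ :: "nat set \<Rightarrow> nat \<Rightarrow> circuit" where
  "circ R j = (cv (initr R), replicate j (cop (Dr R)) @ [cop Hr, cop Ir])"

definition applyr :: "basis set \<Rightarrow> (basis \<Rightarrow> basis \<Rightarrow> real) \<Rightarrow> (basis \<Rightarrow> real) \<Rightarrow> basis \<Rightarrow> real" where
  "applyr S U v = (\<lambda>i. if i \<in> S then (\<Sum>j\<in>S. U i j * v j) else 0)"
definition queryr :: "(nat \<Rightarrow> bool) \<Rightarrow> (basis \<Rightarrow> real) \<Rightarrow> basis \<Rightarrow> real" where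
  "queryr g v = (\<lambda>(r, b, w). v (r, b \<noteq> g r, w))"

lemma apply_cop: "apply_op S (cop U) (cv v) = cv (applyr S U v)"
  by (auto simp: apply_op_def cop_def cv_def applyr_def fun_eq_iff)

lemma query_cv: "query_gate g (cv v) = cv (queryr g v)"
  by (auto simp: query_gate_def queryr_def cv_def fun_eq_iff)

lemma unitary_cop:
  assumes "\<And>i j. i \<in> S \<Longrightarrow> j \<in> S \<Longrightarrow> (\<Sum>k\<in>S. U k i * U k j) = (if i = j then 1 else 0)"
  shows "unitary_on S (cop U)"
  unfolding unitary_on_def
proof (intro ballI)
  fix i j assume ij: "i \<in> S" "j \<in> S"
  have "(\<Sum>k\<in>S. cnj (cop U k i) * cop U k j) = complex_of_real (\<Sum>k\<in>S. U k i * U k j)"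
    by (simp add: cop_def)
  also have "\<dots> = (if i = j then 1 else 0)" using assms[OF ij] by simp
  finally show "(\<Sum>k\<in>S. cnj (cop U k i) * cop U k j) = (if i = j then 1 else 0)" .
qed

lemma final_state_append:
  "final_state S g v (xs @ ys) = final_state S g (final_state S g v xs) ys"
  by (induction xs arbitrary: v) auto

lemma sum_delta_prod:
  assumes "finite R" "r1 \<in> R" "r2 \<in> R" "card R > 0"
  shows "(\<Sum>r\<in>R. (2 / real (card R) - (if r = r1 then 1 else 0)) * (2 / real (card R) - (if r = r2 then 1 else 0)))
     = (if r1 = r2 then 1 else 0)"
proof -
  define N where "N = real (card R)"
  have N: "N > 0" using assms by (simp add: N_def)
  have "(\<Sum>r\<in>R. (2 / N - (if r = r1 then 1 else 0)) * (2 / N - (if r = r2 then 1 else 0)))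
      = (\<Sum>r\<in>R. 4 / N^2 - (if r = r1 then 2 / N else 0) - (if r = r2 then 2 / N else 0)
            + (if r = r1 then (if r1 = r2 then 1 else 0) else 0))"
    using N by (intro sum.cong refl) (auto simp: power2_eq_square field_simps)
  also have "\<dots> = N * (4 / N^2) - 2 / N - 2 / N + (if r1 = r2 then 1 else 0)"
    using assms by (simp add: sum.distrib sum_subtractf sum.delta' N_def)
  also have "\<dots> = (if r1 = r2 then 1 else 0)" using N by (simp add: power2_eq_square field_simps)
  finally show ?thesis by (simp add: N_def)
qed

lemma unitary_D:
  assumes "finite R" "card R > 0"
  shows "unitary_on (qcarrier R (Suc 0)) (cop (Dr R))"
proof (rule unitary_cop)
  fix i j assume "i \<in> qcarrier R (Suc 0)" "j \<in> qcarrier R (Suc 0)"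
  then obtain r1 b1 r2 b2 where ij: "i = (r1, b1, 0)" "j = (r2, b2, 0)" "r1 \<in> R" "r2 \<in> R"
    by (cases i; cases j) auto
  show "(\<Sum>k\<in>qcarrier R (Suc 0). Dr R k i * Dr R k j) = (if i = j then 1 else 0)"
    using sum_delta_prod[OF assms(1) ij(3,4) assms(2)] assms
    by (cases b1; cases b2) (simp_all add: sum_qcarrier1 ij Dr_def)
qed

lemma hh_sum: "hh False b1 * hh False b2 + hh True b1 * hh True b2 = (if b1 = b2 then 1 else 0)"
  by (cases b1; cases b2) (simp_all add: hh_def)

lemma unitary_H:
  assumes "finite R"
  shows "unitary_on (qcarrier R (Suc 0)) (cop Hr)"
proof (rule unitary_cop)
  fix i j assume "i \<in> qcarrier R (Suc 0)" "j \<in> qcarrier R (Suc 0)"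
  then obtain r1 b1 r2 b2 where ij: "i = (r1, b1, 0)" "j = (r2, b2, 0)" "r1 \<in> R" "r2 \<in> R"
    by (cases i; cases j) auto
  have eq: "(\<lambda>r. Hr (r, False, 0) i * Hr (r, False, 0) j + Hr (r, True, 0) i * Hr (r, True, 0) j)
     = (\<lambda>r. if r = r1 then (if r1 = r2 then (if b1 = b2 then 1 else 0) else 0) else 0)"
    using hh_sum[of b1 b2] by (auto simp: fun_eq_iff Hr_def ij)
  show "(\<Sum>k\<in>qcarrier R (Suc 0). Hr k i * Hr k j) = (if i = j then 1 else 0)"
    unfolding sum_qcarrier1[OF assms] eq using ij assms by (simp add: sum.delta)
qed

lemma unitary_I:
  assumes "finite R"
  shows "unitary_on (qcarrier R (Suc 0)) (cop Ir)"
proof (rule unitary_cop)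
  fix i j assume "i \<in> qcarrier R (Suc 0)" "j \<in> qcarrier R (Suc 0)"
  have eq: "(\<lambda>k. Ir k i * Ir k j) = (\<lambda>k. if k = i then (if i = j then 1 else 0) else 0)"
    by (auto simp: Ir_def fun_eq_iff)
  show "(\<Sum>k\<in>qcarrier R (Suc 0). Ir k i * Ir k j) = (if i = j then 1 else 0)"
    unfolding eq using \<open>i \<in> qcarrier R (Suc 0)\<close> assms by (simp add: sum.delta qcarrier_def)
qed



definition bitr :: "nat set \<Rightarrow> (nat \<Rightarrow> bool) \<Rightarrow> real \<Rightarrow> real \<Rightarrow> basis \<Rightarrow> real" where
  "bitr R g a b = (\<lambda>(r, bb, w). if r \<in> R \<and> w = 0 \<and> bb then amp g a b r else 0)"
definition finr :: "nat set \<Rightarrow> (nat \<Rightarrow> bool) \<Rightarrow> real \<Rightarrow> real \<Rightarrow> basis \<Rightarrow> real" where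
  "finr R g a b = (\<lambda>(r, bb, w). if r \<in> R \<and> w = 0 \<and> bb = (\<not> g r) then amp g a b r else 0)"

lemma query_psr: "queryr g (psr R g a b) = psr R g (-a) b"
  by (auto simp: fun_eq_iff queryr_def psr_def amp_def sgnb_def)

lemma apply_D_psr:
  assumes R: "finite R" "card R > 0"
  shows "applyr (qcarrier R (Suc 0)) (Dr R) (psr R g a b)
       = psr R g (2 * ((\<Sum>r\<in>R. amp g a b r) / real (card R)) - a) (2 * ((\<Sum>r\<in>R. amp g a b r) / real (card R)) - b)"
    (is "?l = psr R g (2 * ?mu - a) (2 * ?mu - b)")
proof (rule ext)
  fix i :: basis
  obtain r bb w where i: "i = (r, bb, w)" by (cases i)
  show "?l i = psr R g (2 * ?mu - a) (2 * ?mu - b) i"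
  proof (cases "r \<in> R \<and> w = 0")
    case False then show ?thesis by (auto simp: i applyr_def psr_def)
  next
    case True
    have "(\<Sum>k\<in>qcarrier R (Suc 0). Dr R i k * psr R g a b k)
        = (\<Sum>r'\<in>R. sgnb bb * (2 / real (card R) * amp g a b r') - (if r' = r then sgnb bb * amp g a b r else 0))"
      unfolding sum_qcarrier1[OF R(1)]
      by (intro sum.cong refl) (cases bb; auto simp: i True Dr_def psr_def algebra_simps)
    also have "\<dots> = sgnb bb * (2 * ?mu - amp g a b r)"
      using True R by (simp add: sum_subtractf sum.delta' sum_distrib_left[symmetric] sum_divide_distrib[symmetric] algebra_simps)
    finally show ?thesis using True by (simp add: i applyr_def psr_def amp_def)
  qed
qed

lemma apply_H_psr:
  assumes R: "finite R"
  shows "applyr (qcarrier R (Suc 0)) Hr (psr R g a b) = bitr R g a b"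
proof (rule ext)
  fix i :: basis
  obtain r bb w where i: "i = (r, bb, w)" by (cases i)
  show "applyr (qcarrier R (Suc 0)) Hr (psr R g a b) i = bitr R g a b i"
  proof (cases "r \<in> R \<and> w = 0")
    case False then show ?thesis by (auto simp: i applyr_def bitr_def)
  next
    case True
    have "(\<Sum>k\<in>qcarrier R (Suc 0). Hr i k * psr R g a b k)
        = (\<Sum>r'\<in>R. if r' = r then (if bb then amp g a b r else 0) else 0)"
      unfolding sum_qcarrier1[OF R(1)]
      by (intro sum.cong refl) (cases bb; auto simp: i True Hr_def psr_def hh_def sgnb_def)
    also have "\<dots> = (if bb then amp g a b r else 0)"
      using True R by (simp add: sum.delta')
    finally show ?thesis using True by (simp add: i applyr_def bitr_def)
  qed
qed

lemma query_bitr: "queryr g (bitr R g a b) = finr R g a b"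
  by (auto simp: fun_eq_iff queryr_def bitr_def finr_def)

lemma apply_I:
  assumes "finite R" "\<And>i. i \<notin> qcarrier R (Suc 0) \<Longrightarrow> v i = 0"
  shows "applyr (qcarrier R (Suc 0)) Ir v = v"
proof (rule ext)
  fix i
  have eq: "(\<lambda>k. Ir i k * v k) = (\<lambda>k. if k = i then v i else 0)" by (auto simp: Ir_def fun_eq_iff)
  show "applyr (qcarrier R (Suc 0)) Ir v i = v i"
    using assms unfolding applyr_def eq by (simp add: qcarrier_def sum.delta')
qed

lemma finr_out: "i \<notin> qcarrier R (Suc 0) \<Longrightarrow> finr R g a b i = 0"
  by (cases i) (auto simp: finr_def)

lemma initr_psr: "initr R = psr R g (1 / sqrt (real (card R))) (1 / sqrt (real (card R)))"
  by (auto simp: fun_eq_iff initr_def psr_def amp_def)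

definition gstep :: "nat set \<Rightarrow> (nat \<Rightarrow> bool) \<Rightarrow> real \<times> real \<Rightarrow> real \<times> real" where
  "gstep R g ab = (let mu = (\<Sum>r\<in>R. amp g (- fst ab) (snd ab) r) / real (card R)
                   in (2 * mu + fst ab, 2 * mu - snd ab))"

lemma grover_iter:
  assumes R: "finite R" "card R > 0"
  shows "final_state (qcarrier R (Suc 0)) g (cv (psr R g a b)) (replicate j (cop (Dr R)))
       = cv (psr R g (fst ((gstep R g ^^ j) (a, b))) (snd ((gstep R g ^^ j) (a, b))))"
proof (induction j arbitrary: a b)
  case 0 then show ?case by simp
next
  case (Suc j)
  have "apply_op (qcarrier R (Suc 0)) (cop (Dr R)) (query_gate g (cv (psr R g a b)))
      = cv (psr R g (fst (gstep R g (a, b))) (snd (gstep R g (a, b))))"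
    by (simp add: query_cv apply_cop query_psr apply_D_psr[OF R] gstep_def Let_def)
  then show ?case
    by (simp add: Suc funpow_Suc_right del: funpow.simps)
qed

definition galpha :: "nat set \<Rightarrow> (nat \<Rightarrow> bool) \<Rightarrow> nat \<Rightarrow> real" where
  "galpha R g j = fst ((gstep R g ^^ j) (1 / sqrt (real (card R)), 1 / sqrt (real (card R))))"
definition gbeta :: "nat set \<Rightarrow> (nat \<Rightarrow> bool) \<Rightarrow> nat \<Rightarrow> real" where
  "gbeta R g j = snd ((gstep R g ^^ j) (1 / sqrt (real (card R)), 1 / sqrt (real (card R))))"

lemma circ_final:
  assumes R: "finite R" "card R > 0"
  shows "final_state (qcarrier R (Suc 0)) g (fst (circ R j)) (snd (circ R j))
       = cv (finr R g (- galpha R g j) (gbeta R g j))"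
proof -
  have fin: "\<And>i. i \<notin> qcarrier R (Suc 0) \<Longrightarrow> finr R g (- galpha R g j) (gbeta R g j) i = 0"
    by (rule finr_out)
  show ?thesis
    unfolding circ_def fst_conv snd_conv final_state_append initr_psr[of R g]
    by (simp add: grover_iter[OF R] galpha_def[symmetric] gbeta_def[symmetric] query_cv apply_cop
        query_psr apply_H_psr[OF R(1)] query_bitr apply_I[OF R(1) fin])
qed



lemma card_split:
  assumes "finite R"
  shows "card {r\<in>R. g r} + card {r\<in>R. \<not> g r} = card R"
proof -
  have "card ({r\<in>R. g r} \<union> {r\<in>R. \<not> g r}) = card {r\<in>R. g r} + card {r\<in>R. \<not> g r}"
    using assms by (intro card_Un_disjoint) auto
  moreover have "{r\<in>R. g r} \<union> {r\<in>R. \<not> g r} = R" by auto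
  ultimately show ?thesis by simp
qed

lemma sum_amp:
  assumes "finite R"
  shows "(\<Sum>r\<in>R. amp g a b r) = real (card {r\<in>R. g r}) * a + real (card {r\<in>R. \<not> g r}) * b"
  using assms by (simp add: amp_def sum.If_cases Int_def)

lemma amp_sq: "(amp g a b r)\<^sup>2 = amp g (a\<^sup>2) (b\<^sup>2) r" by (simp add: amp_def)

lemma gstep_eq:
  assumes "finite R"
  shows "gstep R g (a, b) =
    (let mu = (- real (card {r\<in>R. g r}) * a + real (card {r\<in>R. \<not> g r}) * b) / real (card R)
     in (2 * mu + a, 2 * mu - b))"
  using assms by (simp add: gstep_def sum_amp)

lemma gstep_norm:
  assumes "finite R" "card R > 0"
  shows "real (card {r\<in>R. g r}) * (fst (gstep R g (a, b)))\<^sup>2 + real (card {r\<in>R. \<not> g r}) * (snd (gstep R g (a, b)))\<^sup>2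
       = real (card {r\<in>R. g r}) * a\<^sup>2 + real (card {r\<in>R. \<not> g r}) * b\<^sup>2"
proof -
  define t where "t = real (card {r\<in>R. g r})"
  define u where "u = real (card {r\<in>R. \<not> g r})"
  have N: "real (card R) = t + u" using card_split[OF assms(1), of g] by (simp add: t_def u_def flip: of_nat_add)
  have pos: "t + u > 0" using N assms by simp
  define mu where "mu = (- t * a + u * b) / (t + u)"
  have g: "gstep R g (a, b) = (2 * mu + a, 2 * mu - b)"
    using gstep_eq[OF assms(1), of g a b] by (simp add: t_def u_def mu_def N Let_def)
  have "mu * (t + u) = - t * a + u * b" using pos by (simp add: mu_def)
  then have "t * (2 * mu + a)\<^sup>2 + u * (2 * mu - b)\<^sup>2 = t * a\<^sup>2 + u * b\<^sup>2"
    by (simp add: power2_eq_square algebra_simps) (smt (verit) distrib_left mult.commute mult.left_commute)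
  then show ?thesis by (simp add: g t_def u_def)
qed

lemma galpha_norm:
  assumes "finite R" "card R > 0"
  shows "real (card {r\<in>R. g r}) * (galpha R g j)\<^sup>2 + real (card {r\<in>R. \<not> g r}) * (gbeta R g j)\<^sup>2 = 1"
proof (induction j)
  case 0
  have "real (card {r\<in>R. g r}) + real (card {r\<in>R. \<not> g r}) = real (card R)"
    using card_split[OF assms(1), of g] by (simp flip: of_nat_add)
  moreover have "R \<noteq> {}" using assms by auto
  ultimately show ?case using assms by (simp add: galpha_def gbeta_def power_divide add_divide_distrib[symmetric])
next
  case (Suc j)
  have "(gstep R g ^^ Suc j) (1 / sqrt (real (card R)), 1 / sqrt (real (card R))) = gstep R g (galpha R g j, gbeta R g j)"
    by (simp add: galpha_def gbeta_def)
  then show ?case using gstep_norm[OF assms, of g "galpha R g j" "gbeta R g j"] Suc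
    by (simp add: galpha_def[of R g "Suc j"] gbeta_def[of R g "Suc j"])
qed

lemma trig_step:
  fixes K s c t u \<alpha> \<beta> \<phi> \<theta> :: real
  assumes K: "K > 0" and t: "t = K\<^sup>2 * s\<^sup>2" and u: "u = K\<^sup>2 * c\<^sup>2" and s: "s = sin \<theta>" and c: "c = cos \<theta>"
    and a: "K * s * \<alpha> = sin \<phi>" and b: "u * \<beta> = K * c * cos \<phi>"
  shows "K * s * (2 * ((- t * \<alpha> + u * \<beta>) / K\<^sup>2) + \<alpha>) = sin (\<phi> + 2 * \<theta>)"
    and "u * (2 * ((- t * \<alpha> + u * \<beta>) / K\<^sup>2) - \<beta>) = K * c * cos (\<phi> + 2 * \<theta>)"
proof -
  have ta: "t * \<alpha> = K * s * sin \<phi>" using a t by (simp add: power2_eq_square)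
  have mu: "(- t * \<alpha> + u * \<beta>) / K\<^sup>2 = (- s * sin \<phi> + c * cos \<phi>) / K"
  proof -
    have "- t * \<alpha> + u * \<beta> = - (K * s * sin \<phi>) + K * c * cos \<phi>" using ta b by linarith
    then have e: "- t * \<alpha> + u * \<beta> = K * (- s * sin \<phi> + c * cos \<phi>)" by (simp add: algebra_simps)
    show ?thesis unfolding e using K by (simp add: power2_eq_square)
  qed
  have sc: "s\<^sup>2 + c\<^sup>2 = 1" using s c by simp
  have S2: "sin (\<phi> + 2 * \<theta>) = sin \<phi> * (1 - 2 * s\<^sup>2) + cos \<phi> * (2 * s * c)"
    by (simp add: sin_add sin_double cos_double_sin s c)
  have C2: "cos (\<phi> + 2 * \<theta>) = cos \<phi> * (2 * c\<^sup>2 - 1) - sin \<phi> * (2 * s * c)"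
    by (simp add: cos_add sin_double cos_double_cos s c)
  show "K * s * (2 * ((- t * \<alpha> + u * \<beta>) / K\<^sup>2) + \<alpha>) = sin (\<phi> + 2 * \<theta>)"
    unfolding mu S2 using K a sc
    by (simp add: field_simps power2_eq_square)
  show "u * (2 * ((- t * \<alpha> + u * \<beta>) / K\<^sup>2) - \<beta>) = K * c * cos (\<phi> + 2 * \<theta>)"
    unfolding mu C2 using K b sc u
    by (simp add: field_simps power2_eq_square) metis
qed


lemma galpha_step: "(galpha R g (Suc j), gbeta R g (Suc j)) = gstep R g (galpha R g j, gbeta R g j)"
  by (simp add: galpha_def gbeta_def)

definition gtheta :: "nat set \<Rightarrow> (nat \<Rightarrow> bool) \<Rightarrow> real" where
  "gtheta R g = arcsin (sqrt (real (card {r\<in>R. g r}) / real (card R)))"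

lemma galpha_trig:
  assumes R: "finite R" "card R > 0"
  shows "real (card {r\<in>R. g r}) * (galpha R g j)\<^sup>2 = (sin ((2 * real j + 1) * gtheta R g))\<^sup>2"
proof -
  define t where "t = real (card {r\<in>R. g r})"
  define u where "u = real (card {r\<in>R. \<not> g r})"
  define N where "N = real (card R)"
  have N: "N = t + u" using card_split[OF R(1), of g] by (simp add: t_def u_def N_def flip: of_nat_add)
  have Npos: "N > 0" using R by (simp add: N_def)
  have tN: "t \<le> N" "0 \<le> t" "0 \<le> u" using N by (auto simp: t_def u_def)
  define K where "K = sqrt N"
  define \<theta> where "\<theta> = gtheta R g"
  define s where "s = sin \<theta>"
  define c where "c = cos \<theta>"
  have x1: "sqrt (t / N) \<le> 1" using tN Npos by simp
  have x0: "0 \<le> sqrt (t / N)" using tN Npos by simp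
  have m1: "-1 \<le> sqrt (t / N)" using x0 by linarith
  have th: "\<theta> = arcsin (sqrt (t / N))" by (simp add: \<theta>_def gtheta_def t_def N_def)
  have s': "s = sqrt (t / N)" unfolding s_def th by (rule sin_arcsin) (use m1 x1 in auto)
  have c': "c = sqrt (1 - (sqrt (t / N))\<^sup>2)" unfolding c_def th by (rule cos_arcsin) (use m1 x1 in auto)
  have K: "K > 0" using Npos by (simp add: K_def)
  have KK: "K\<^sup>2 = N" using Npos by (simp add: K_def)
  have teq: "t = K\<^sup>2 * s\<^sup>2" using Npos tN by (simp add: KK s')
  have ueq: "u = K\<^sup>2 * c\<^sup>2" using Npos tN by (simp add: KK c' N field_simps)
  have inv: "K * s * galpha R g j = sin ((2 * real j + 1) * \<theta>) \<and> u * gbeta R g j = K * c * cos ((2 * real j + 1) * \<theta>)"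
  proof (induction j)
    case 0
    have "K * s * (1 / K) = sin \<theta>" using K by (simp add: s_def)
    moreover have "u * (1 / K) = K * c * cos \<theta>" using K by (simp add: ueq c_def power2_eq_square)
    ultimately show ?case by (simp add: galpha_def gbeta_def K_def N_def)
  next
    case (Suc j)
    have gs: "gstep R g (galpha R g j, gbeta R g j) =
      (2 * ((- t * galpha R g j + u * gbeta R g j) / K\<^sup>2) + galpha R g j,
       2 * ((- t * galpha R g j + u * gbeta R g j) / K\<^sup>2) - gbeta R g j)"
      by (simp add: gstep_eq[OF R(1)] Let_def KK t_def u_def N_def)
    have a': "galpha R g (Suc j) = 2 * ((- t * galpha R g j + u * gbeta R g j) / K\<^sup>2) + galpha R g j"
      and b': "gbeta R g (Suc j) = 2 * ((- t * galpha R g j + u * gbeta R g j) / K\<^sup>2) - gbeta R g j"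
      using galpha_step[of R g j] unfolding gs by auto
    have ang: "(2 * real (Suc j) + 1) * \<theta> = (2 * real j + 1) * \<theta> + 2 * \<theta>" by (simp add: algebra_simps)
    show ?case unfolding a' b' ang
      using trig_step[OF K teq ueq s_def c_def, of "galpha R g j" "(2 * real j + 1) * \<theta>" "gbeta R g j"] Suc
      by auto
  qed
  have "t * (galpha R g j)\<^sup>2 = (K * s * galpha R g j)\<^sup>2" by (simp add: teq power_mult_distrib)
  then show ?thesis using inv by (simp add: t_def \<theta>_def)
qed

lemma gtheta_range:
  assumes R: "finite R" "card {r\<in>R. g r} > 0"
  shows "0 < gtheta R g" "gtheta R g \<le> pi / 2"
    "sin (gtheta R g) = sqrt (real (card {r\<in>R. g r}) / real (card R))"
proof -
  have le: "card {r\<in>R. g r} \<le> card R" using R by (intro card_mono) auto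
  then have pos: "card R > 0" using R by simp
  have x1: "sqrt (real (card {r\<in>R. g r}) / real (card R)) \<le> 1" using le pos by simp
  have x0: "0 < sqrt (real (card {r\<in>R. g r}) / real (card R))" using R pos by simp
  have m1: "-1 \<le> sqrt (real (card {r\<in>R. g r}) / real (card R))" using x0 by linarith
  show "0 < gtheta R g" unfolding gtheta_def using x0 x1 arcsin_less_arcsin[of 0 "sqrt (real (card {r\<in>R. g r}) / real (card R))"] by simp
  show "gtheta R g \<le> pi / 2" unfolding gtheta_def using m1 x1 arcsin_ubound[of "sqrt (real (card {r\<in>R. g r}) / real (card R))"] by simp
  show "sin (gtheta R g) = sqrt (real (card {r\<in>R. g r}) / real (card R))" unfolding gtheta_def by (rule sin_arcsin) (use m1 x1 in auto)
qed



lemma op_circ: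
  assumes R: "finite R" "card R > 0"
  shows "outcome_prob (qcarrier R (Suc 0)) g (circ R j) out = (finr R g (- galpha R g j) (gbeta R g j) out)\<^sup>2"
  unfolding outcome_prob_def circ_final[OF R] by (simp add: cv_def)

lemma op_outside:
  assumes R: "finite R" "card R > 0" and "out \<notin> qcarrier R (Suc 0)"
  shows "outcome_prob (qcarrier R (Suc 0)) g (circ R j) out = 0"
  using assms by (simp add: op_circ finr_out)

lemma op_total:
  assumes R: "finite R" "card R > 0"
  shows "(\<Sum>out\<in>qcarrier R (Suc 0). outcome_prob (qcarrier R (Suc 0)) g (circ R j) out) = 1"
proof -
  have "(\<Sum>out\<in>qcarrier R (Suc 0). outcome_prob (qcarrier R (Suc 0)) g (circ R j) out)
      = (\<Sum>r\<in>R. amp g ((galpha R g j)\<^sup>2) ((gbeta R g j)\<^sup>2) r)"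
    unfolding sum_qcarrier1[OF R(1)] op_circ[OF R]
    by (intro sum.cong refl) (auto simp: finr_def amp_def)
  also have "\<dots> = 1" using galpha_norm[OF R, of g j] by (simp add: sum_amp[OF R(1)])
  finally show ?thesis .
qed

lemma op_succ:
  assumes R: "finite R" "card R > 0"
  shows "(\<Sum>out\<in>qcarrier R (Suc 0). outcome_prob (qcarrier R (Suc 0)) g (circ R j) out * (if fst (snd out) then 0 else 1))
      = (sin ((2 * real j + 1) * gtheta R g))\<^sup>2"
proof -
  have "(\<Sum>out\<in>qcarrier R (Suc 0). outcome_prob (qcarrier R (Suc 0)) g (circ R j) out * (if fst (snd out) then 0 else 1))
      = (\<Sum>r\<in>R. amp g ((galpha R g j)\<^sup>2) 0 r)"
    unfolding sum_qcarrier1[OF R(1)] op_circ[OF R]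
    by (intro sum.cong refl) (auto simp: finr_def amp_def)
  also have "\<dots> = (sin ((2 * real j + 1) * gtheta R g))\<^sup>2" using galpha_trig[OF R, of g j] by (simp add: sum_amp[OF R(1)])
  finally show ?thesis .
qed

lemma op_pos:
  assumes R: "finite R" "card R > 0" and "outcome_prob (qcarrier R (Suc 0)) g (circ R j) (r, False, w) > 0"
  shows "r \<in> R \<and> g r"
  using assms(3) unfolding op_circ[OF R] by (auto simp: finr_def split: if_splits)

lemma valid_circ:
  assumes R: "finite R" "card R > 0"
  shows "valid_circuit (qcarrier R (Suc 0)) (circ R j)"
  unfolding valid_circuit_def
proof (intro conjI)
  show "\<forall>i. i \<notin> qcarrier R (Suc 0) \<longrightarrow> fst (circ R j) i = 0"
    by (auto simp: circ_def cv_def initr_def qcarrier_def)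
  have "(\<Sum>i\<in>qcarrier R (Suc 0). (cmod (fst (circ R j) i))\<^sup>2) = (\<Sum>r\<in>R. 1 / real (card R))"
    unfolding sum_qcarrier1[OF R(1)]
    by (intro sum.cong refl) (simp only: circ_def fst_conv cv_def norm_of_real power2_abs, simp add: initr_def sgnb_def power_divide power_mult_distrib)
  also have "\<dots> = 1" using R by (simp add: card_gt_0_iff)
  finally show "(\<Sum>i\<in>qcarrier R (Suc 0). (cmod (fst (circ R j) i))\<^sup>2) = 1" .
  show "\<forall>U\<in>set (snd (circ R j)). unitary_on (qcarrier R (Suc 0)) U"
    using unitary_D[OF R] unitary_H[OF R(1)] unitary_I[OF R(1)] by (auto simp: circ_def)
qed

lemma circ_inj: "circ R i = circ R j \<Longrightarrow> i = j"
proof -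
  assume "circ R i = circ R j"
  then have "length (snd (circ R i)) = length (snd (circ R j))" by simp
  then show "i = j" by (simp add: circ_def)
qed

lemma queries_circ: "queries (circ R j) = j + 2"
  by (simp add: queries_def circ_def)



lemma nn_integral_list:
  fixes \<Psi> :: "'a list \<Rightarrow> ennreal"
  shows "(\<integral>\<^sup>+ h. \<Psi> h \<partial>count_space UNIV) = \<Psi> [] + (\<integral>\<^sup>+ h'. \<integral>\<^sup>+ x. \<Psi> (x # h') \<partial>count_space UNIV \<partial>count_space UNIV)"
proof -
  have split: "\<Psi> h = \<Psi> h * indicator {[]} h + \<Psi> h * indicator {h. h \<noteq> []} h" for h
    by (cases h) auto
  have "(\<integral>\<^sup>+ h. \<Psi> h \<partial>count_space UNIV) = (\<integral>\<^sup>+ h. \<Psi> h * indicator {[]} h \<partial>count_space UNIV) + (\<integral>\<^sup>+ h. \<Psi> h * indicator {h. h \<noteq> []} h \<partial>count_space UNIV)"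
    by (subst split) (rule nn_integral_add; simp)
  also have "(\<integral>\<^sup>+ h. \<Psi> h * indicator {[]} h \<partial>count_space UNIV) = \<Psi> []"
    by (simp add: nn_integral_count_space_indicator[symmetric] nn_integral_count_space_finite)
  also have "(\<integral>\<^sup>+ h. \<Psi> h * indicator {h. h \<noteq> []} h \<partial>count_space UNIV) = (\<integral>\<^sup>+ h. \<Psi> h \<partial>count_space {h. h \<noteq> []})"
    by (simp add: nn_integral_count_space_indicator)
  also have "\<dots> = (\<integral>\<^sup>+ p. \<Psi> (case p of (x, h') \<Rightarrow> x # h') \<partial>count_space UNIV)"
  proof (rule nn_integral_bij_count_space[symmetric])
    show "bij_betw (\<lambda>(x, h'). x # h') UNIV {h. h \<noteq> []}"
      by (auto simp: bij_betw_def inj_on_def image_iff neq_Nil_conv)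
  qed
  also have "\<dots> = (\<integral>\<^sup>+ h'. \<integral>\<^sup>+ x. \<Psi> (x # h') \<partial>count_space UNIV \<partial>count_space UNIV)"
    using nn_integral_snd_count_space[of "\<lambda>(x, h'). \<Psi> (x # h')"] by (simp add: case_prod_beta')
  finally show ?thesis .
qed

lemma nn_integral_layers:
  fixes \<Psi> :: "'a list \<Rightarrow> ennreal"
  shows "(\<integral>\<^sup>+ h. \<Psi> h \<partial>count_space UNIV) = (\<Sum>n. \<integral>\<^sup>+ h. indicator {h. length h = n} h * \<Psi> h \<partial>count_space UNIV)"
proof -
  have "\<Psi> h = (\<Sum>n. indicator {h. length h = n} h * \<Psi> h)" for h
  proof -
    have "(\<lambda>n. if n = length h then \<Psi> h else 0) sums \<Psi> h" by (rule sums_single)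
    moreover have "(\<lambda>n. indicator {h. length h = n} h * \<Psi> h) = (\<lambda>n. if n = length h then \<Psi> h else 0)"
      by (auto simp: fun_eq_iff indicator_def)
    ultimately show ?thesis by (simp add: sums_iff)
  qed
  then have "(\<integral>\<^sup>+ h. \<Psi> h \<partial>count_space UNIV) = (\<integral>\<^sup>+ h. (\<Sum>n. indicator {h. length h = n} h * \<Psi> h) \<partial>count_space UNIV)"
    by simp
  also have "\<dots> = (\<Sum>n. \<integral>\<^sup>+ h. indicator {h. length h = n} h * \<Psi> h \<partial>count_space UNIV)"
    by (rule nn_integral_suminf) simp
  finally show ?thesis .
qed

lemma nn_integral_layer_Suc:
  fixes \<Psi> :: "'a list \<Rightarrow> ennreal"
  shows "(\<integral>\<^sup>+ h. indicator {h. length h = Suc n} h * \<Psi> h \<partial>count_space UNIV)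
       = (\<integral>\<^sup>+ h'. indicator {h. length h = n} h' * (\<integral>\<^sup>+ x. \<Psi> (x # h') \<partial>count_space UNIV) \<partial>count_space UNIV)"
  apply (subst nn_integral_list)
  apply (simp add: indicator_def)
  apply (intro nn_integral_cong)
  apply (auto simp: nn_integral_cmult[symmetric])
  done



definition Mk :: "nat \<Rightarrow> nat" where "Mk n = 2 ^ (n div 4)"
definition alive :: "history \<Rightarrow> bool" where "alive h = (h = [] \<or> fst (snd (snd (hd h))))"
definition trial :: "nat set \<Rightarrow> nat \<Rightarrow> action pmf" where
  "trial R n = map_pmf (\<lambda>j. Run (circ R j)) (pmf_of_set {..<Mk n})"
definition strat :: "nat set \<Rightarrow> strategy" where
  "strat R h = (if alive h then trial R (length h) else return_pmf (Halt (fst (snd (hd h)))))"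

lemma Mk_pos: "Mk n > 0" by (simp add: Mk_def)

lemma inj_Run_circ: "inj (\<lambda>j. Run (circ R j))"
  by (auto simp: inj_def dest: circ_inj)

lemma pmf_trial_Run:
  "pmf (trial R n) (Run c) = (if c \<in> circ R ` {..<Mk n} then 1 / real (Mk n) else 0)"
proof (cases "c \<in> range (circ R)")
  case True
  then obtain j where c: "c = circ R j" by auto
  have "pmf (trial R n) (Run c) = pmf (pmf_of_set {..<Mk n}) j"
    unfolding trial_def c by (rule pmf_map_inj'[OF inj_Run_circ, where x = j])
  also have "\<dots> = (if j < Mk n then 1 / real (Mk n) else 0)"
    using Mk_pos[of n] by (subst pmf_of_set) (auto simp: indicator_def)
  also have "(j < Mk n) = (c \<in> circ R ` {..<Mk n})" using c by (auto dest: circ_inj)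
  finally show ?thesis .
next
  case False
  then have "Run c \<notin> set_pmf (trial R n)" by (auto simp: trial_def)
  then show ?thesis using False by (auto simp: pmf_eq_0_set_pmf)
qed

lemma pmf_trial_Halt: "pmf (trial R n) (Halt r) = 0"
  by (auto simp: pmf_eq_0_set_pmf trial_def)

lemma valid_strat:
  assumes R: "finite R" "card R > 0"
  shows "valid_strategy (qcarrier R (Suc 0)) (strat R)"
  unfolding valid_strategy_def
proof (intro allI impI)
  fix h c assume "pmf (strat R h) (Run c) > 0"
  then have "c \<in> circ R ` {..<Mk (length h)}"
    by (auto simp: strat_def pmf_trial_Run split: if_splits)
  then show "valid_circuit (qcarrier R (Suc 0)) c" using valid_circ[OF R] by auto
qed

abbreviation HP where "HP R g h \<equiv> hist_prob (qcarrier R (Suc 0)) g (strat R) h"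

lemma outcome_prob_nonneg: "0 \<le> outcome_prob S g c out" by (simp add: outcome_prob_def)

lemma HP_nonneg: "0 \<le> hist_prob S g \<sigma> h"
proof (induction h)
  case (Cons x h) then show ?case by (cases x) (auto simp: outcome_prob_nonneg)
qed simp

lemma HP_Cons: "hist_prob S g \<sigma> (x # h) = hist_prob S g \<sigma> h * pmf (\<sigma> h) (Run (fst x)) * outcome_prob S g (fst x) (snd x)"
  by (cases x) simp

lemma inner_trial:
  assumes R: "finite R" "card R > 0" and \<phi>: "\<And>x. 0 \<le> \<phi> x"
  shows "(\<integral>\<^sup>+ x. ennreal (pmf (trial R n) (Run (fst x)) * outcome_prob (qcarrier R (Suc 0)) g (fst x) (snd x)) * ennreal (\<phi> x) \<partial>count_space UNIV)
    = ennreal (\<Sum>j<Mk n. \<Sum>out\<in>qcarrier R (Suc 0). outcome_prob (qcarrier R (Suc 0)) g (circ R j) out / real (Mk n) * \<phi> (circ R j, out))"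
proof -
  define S where "S = qcarrier R (Suc 0)"
  define F where "F = (\<lambda>x. ennreal (pmf (trial R n) (Run (fst x)) * outcome_prob S g (fst x) (snd x)) * ennreal (\<phi> x))"
  have finS: "finite S" using R by (simp add: S_def qcarrier_def)
  have "(\<integral>\<^sup>+ x. F x \<partial>count_space UNIV) = (\<integral>\<^sup>+ c. \<integral>\<^sup>+ out. F (c, out) \<partial>count_space UNIV \<partial>count_space UNIV)"
    by (rule nn_integral_fst_count_space[symmetric])
  also have "\<dots> = (\<Sum>c\<in>circ R ` {..<Mk n}. \<integral>\<^sup>+ out. F (c, out) \<partial>count_space UNIV)"
    by (rule nn_integral_count_space') (auto simp: F_def pmf_trial_Run)
  also have "\<dots> = (\<Sum>j<Mk n. \<integral>\<^sup>+ out. F (circ R j, out) \<partial>count_space UNIV)"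
    by (subst sum.reindex) (auto simp: inj_on_def dest: circ_inj)
  also have "\<dots> = (\<Sum>j<Mk n. \<Sum>out\<in>S. F (circ R j, out))"
    by (intro sum.cong refl nn_integral_count_space'[OF finS])
       (auto simp: F_def S_def op_outside[OF R])
  also have "\<dots> = (\<Sum>j<Mk n. \<Sum>out\<in>S. ennreal (outcome_prob S g (circ R j) out / real (Mk n) * \<phi> (circ R j, out)))"
    by (intro sum.cong refl) (auto simp: F_def pmf_trial_Run ennreal_mult[symmetric] outcome_prob_nonneg \<phi>)
  also have "\<dots> = ennreal (\<Sum>j<Mk n. \<Sum>out\<in>S. outcome_prob S g (circ R j) out / real (Mk n) * \<phi> (circ R j, out))"
    by (simp add: sum_nonneg outcome_prob_nonneg \<phi>)
  finally show ?thesis by (simp add: F_def S_def)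
qed

definition Lay :: "nat set \<Rightarrow> (nat \<Rightarrow> bool) \<Rightarrow> nat \<Rightarrow> (history \<Rightarrow> real) \<Rightarrow> ennreal" where
  "Lay R g n \<phi> = (\<integral>\<^sup>+ h. indicator {h. length h = n} h * (ennreal (HP R g h) * ennreal (\<phi> h)) \<partial>count_space UNIV)"

lemma Lay_Suc:
  assumes R: "finite R" "card R > 0" and \<phi>: "\<And>x. 0 \<le> \<phi> x"
  shows "Lay R g (Suc n) \<phi> = (\<integral>\<^sup>+ h'. indicator {h. length h = n} h' * (ennreal (HP R g h') * (if alive h' then 1 else 0)) *
      ennreal (\<Sum>j<Mk n. \<Sum>out\<in>qcarrier R (Suc 0). outcome_prob (qcarrier R (Suc 0)) g (circ R j) out / real (Mk n) * \<phi> ((circ R j, out) # h')) \<partial>count_space UNIV)"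
  unfolding Lay_def nn_integral_layer_Suc
proof (intro nn_integral_cong)
  fix h' :: history
  show "indicator {h. length h = n} h' * (\<integral>\<^sup>+ x. ennreal (HP R g (x # h')) * ennreal (\<phi> (x # h')) \<partial>count_space UNIV)
     = indicator {h. length h = n} h' * (ennreal (HP R g h') * (if alive h' then 1 else 0)) *
      ennreal (\<Sum>j<Mk n. \<Sum>out\<in>qcarrier R (Suc 0). outcome_prob (qcarrier R (Suc 0)) g (circ R j) out / real (Mk n) * \<phi> ((circ R j, out) # h'))"
  proof (cases "length h' = n")
    case False then show ?thesis by simp
  next
    case len: True
    have e: "ennreal (HP R g (x # h')) * ennreal (\<phi> (x # h')) = ennreal (HP R g h') *
        (ennreal (pmf (strat R h') (Run (fst x)) * outcome_prob (qcarrier R (Suc 0)) g (fst x) (snd x)) * ennreal (\<phi> (x # h')))" for x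
      by (simp add: HP_Cons ennreal_mult' HP_nonneg mult.assoc)
    show ?thesis
    proof (cases "alive h'")
      case True
      have "(\<integral>\<^sup>+ x. ennreal (HP R g (x # h')) * ennreal (\<phi> (x # h')) \<partial>count_space UNIV)
         = ennreal (HP R g h') * (\<integral>\<^sup>+ x. ennreal (pmf (trial R n) (Run (fst x)) * outcome_prob (qcarrier R (Suc 0)) g (fst x) (snd x)) * ennreal (\<phi> (x # h')) \<partial>count_space UNIV)"
        unfolding e using True len by (simp add: strat_def nn_integral_cmult)
      also have "\<dots> = ennreal (HP R g h') * ennreal (\<Sum>j<Mk n. \<Sum>out\<in>qcarrier R (Suc 0). outcome_prob (qcarrier R (Suc 0)) g (circ R j) out / real (Mk n) * \<phi> ((circ R j, out) # h'))"
        by (subst inner_trial[OF R, of "\<lambda>x. \<phi> (x # h')"]) (simp_all add: \<phi>)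
      finally show ?thesis using True len by (simp add: mult.assoc)
    next
      case False
      have "(\<integral>\<^sup>+ x. ennreal (HP R g (x # h')) * ennreal (\<phi> (x # h')) \<partial>count_space UNIV) = 0"
        unfolding e using False by (simp add: strat_def)
      then show ?thesis using False by simp
    qed
  qed
qed



definition pp :: "nat set \<Rightarrow> (nat \<Rightarrow> bool) \<Rightarrow> nat \<Rightarrow> real" where
  "pp R g n = psum (gtheta R g) (Mk n) / real (Mk n)"
definition aa :: "nat set \<Rightarrow> (nat \<Rightarrow> bool) \<Rightarrow> nat \<Rightarrow> real" where
  "aa R g n = (\<Prod>k<n. 1 - pp R g k)"
definition cc :: "nat \<Rightarrow> real" where
  "cc n = (\<Sum>j<Mk n. real j + 2) / real (Mk n)"

definition ind_alive :: "history \<Rightarrow> real" where "ind_alive h = (if alive h then 1 else 0)"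
definition ind_halt :: "history \<Rightarrow> real" where "ind_halt h = (if alive h then 0 else 1)"
definition hc_alive :: "history \<Rightarrow> real" where "hc_alive h = ind_alive h * real (hist_cost h)"
definition hc_halt :: "history \<Rightarrow> real" where "hc_halt h = ind_halt h * real (hist_cost h)"

lemma alive_Cons: "alive ((c, r, b, w) # h) = b" by (simp add: alive_def)

lemma hist_cost_Cons: "hist_cost ((c, out) # h) = queries c + hist_cost h"
  by (simp add: hist_cost_def)

lemma pp_range: "0 \<le> pp R g n" "pp R g n \<le> 1"
  using psum_nonneg[of "gtheta R g" "Mk n"] psum_le[of "gtheta R g" "Mk n"] Mk_pos[of n]
  by (auto simp: pp_def field_simps)

lemma sum_succ_j:
  assumes R: "finite R" "card R > 0"
  shows "(\<Sum>j<Mk n. \<Sum>out\<in>qcarrier R (Suc 0). outcome_prob (qcarrier R (Suc 0)) g (circ R j) out / real (Mk n) * (if fst (snd out) then 0 else 1))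
     = pp R g n"
proof -
  have "(\<Sum>j<Mk n. \<Sum>out\<in>qcarrier R (Suc 0). outcome_prob (qcarrier R (Suc 0)) g (circ R j) out / real (Mk n) * (if fst (snd out) then 0 else 1))
     = (\<Sum>j<Mk n. (\<Sum>out\<in>qcarrier R (Suc 0). outcome_prob (qcarrier R (Suc 0)) g (circ R j) out * (if fst (snd out) then 0 else 1)) / real (Mk n))"
    by (simp add: sum_divide_distrib)
  also have "\<dots> = (\<Sum>j<Mk n. (sin ((2 * real j + 1) * gtheta R g))\<^sup>2 / real (Mk n))"
    by (simp add: op_succ[OF R])
  also have "\<dots> = pp R g n" by (simp add: pp_def psum_def sum_divide_distrib)
  finally show ?thesis .
qed

lemma sum_total_j:
  assumes R: "finite R" "card R > 0"
  shows "(\<Sum>j<Mk n. \<Sum>out\<in>qcarrier R (Suc 0). outcome_prob (qcarrier R (Suc 0)) g (circ R j) out / real (Mk n) * f j) = (\<Sum>j<Mk n. f j / real (Mk n))"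
proof -
  have "(\<Sum>j<Mk n. \<Sum>out\<in>qcarrier R (Suc 0). outcome_prob (qcarrier R (Suc 0)) g (circ R j) out / real (Mk n) * f j)
     = (\<Sum>j<Mk n. (\<Sum>out\<in>qcarrier R (Suc 0). outcome_prob (qcarrier R (Suc 0)) g (circ R j) out) * f j / real (Mk n))"
    by (simp add: sum_divide_distrib sum_distrib_right)
  then show ?thesis by (simp add: op_total[OF R])
qed

lemma Lay_zero: "Lay R g 0 \<phi> = ennreal (\<phi> [])"
proof -
  have "Lay R g 0 \<phi> = (\<integral>\<^sup>+ h. (ennreal (HP R g h) * ennreal (\<phi> h)) * indicator {[]} h \<partial>count_space UNIV)"
    unfolding Lay_def by (intro nn_integral_cong) (auto simp: indicator_def)
  also have "\<dots> = ennreal (\<phi> [])"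
    by (simp add: nn_integral_count_space_indicator[symmetric] nn_integral_count_space_finite)
  finally show ?thesis .
qed

lemma Lay_alive_Suc:
  assumes R: "finite R" "card R > 0"
  shows "Lay R g (Suc n) ind_alive = Lay R g n ind_alive * ennreal (1 - pp R g n)"
proof -
  have e: "(\<Sum>j<Mk n. \<Sum>out\<in>qcarrier R (Suc 0). outcome_prob (qcarrier R (Suc 0)) g (circ R j) out / real (Mk n) * ind_alive ((circ R j, out) # h')) = 1 - pp R g n" for h'
  proof -
    have "(\<Sum>j<Mk n. \<Sum>out\<in>qcarrier R (Suc 0). outcome_prob (qcarrier R (Suc 0)) g (circ R j) out / real (Mk n) * ind_alive ((circ R j, out) # h'))
      = (\<Sum>j<Mk n. \<Sum>out\<in>qcarrier R (Suc 0). outcome_prob (qcarrier R (Suc 0)) g (circ R j) out / real (Mk n) * 1)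
       - (\<Sum>j<Mk n. \<Sum>out\<in>qcarrier R (Suc 0). outcome_prob (qcarrier R (Suc 0)) g (circ R j) out / real (Mk n) * (if fst (snd out) then 0 else 1))"
      unfolding sum_subtractf[symmetric] by (intro sum.cong refl) (auto simp: ind_alive_def alive_def)
    also have "\<dots> = 1 - pp R g n"
      using sum_total_j[OF R, where f = "\<lambda>_. 1" and n = n and g = g] Mk_pos[of n] sum_succ_j[OF R, where n = n and g = g] by simp
    finally show ?thesis .
  qed
  have "Lay R g (Suc n) ind_alive = (\<integral>\<^sup>+ h'. indicator {h. length h = n} h' * (ennreal (HP R g h') * (if alive h' then 1 else 0)) *
      ennreal (\<Sum>j<Mk n. \<Sum>out\<in>qcarrier R (Suc 0). outcome_prob (qcarrier R (Suc 0)) g (circ R j) out / real (Mk n) * ind_alive ((circ R j, out) # h')) \<partial>count_space UNIV)"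
    by (rule Lay_Suc[OF R]) (simp add: ind_alive_def)
  also have "\<dots> = (\<integral>\<^sup>+ h'. indicator {h. length h = n} h' * (ennreal (HP R g h') * ennreal (ind_alive h')) * ennreal (1 - pp R g n) \<partial>count_space UNIV)"
    by (intro nn_integral_cong) (simp only: e, simp add: ind_alive_def)
  also have "\<dots> = Lay R g n ind_alive * ennreal (1 - pp R g n)"
    unfolding Lay_def by (rule nn_integral_multc) simp
  finally show ?thesis .
qed


lemma Lay_halt_Suc:
  assumes R: "finite R" "card R > 0"
  shows "Lay R g (Suc n) ind_halt = Lay R g n ind_alive * ennreal (pp R g n)"
proof -
  have e: "(\<Sum>j<Mk n. \<Sum>out\<in>qcarrier R (Suc 0). outcome_prob (qcarrier R (Suc 0)) g (circ R j) out / real (Mk n) * ind_halt ((circ R j, out) # h')) = pp R g n" for h'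
  proof -
    have "(\<Sum>j<Mk n. \<Sum>out\<in>qcarrier R (Suc 0). outcome_prob (qcarrier R (Suc 0)) g (circ R j) out / real (Mk n) * ind_halt ((circ R j, out) # h'))
      = (\<Sum>j<Mk n. \<Sum>out\<in>qcarrier R (Suc 0). outcome_prob (qcarrier R (Suc 0)) g (circ R j) out / real (Mk n) * (if fst (snd out) then 0 else 1))"
      by (intro sum.cong refl) (auto simp: ind_halt_def alive_def)
    also have "\<dots> = pp R g n" by (rule sum_succ_j[OF R])
    finally show ?thesis .
  qed
  have "Lay R g (Suc n) ind_halt = (\<integral>\<^sup>+ h'. indicator {h. length h = n} h' * (ennreal (HP R g h') * (if alive h' then 1 else 0)) *
      ennreal (\<Sum>j<Mk n. \<Sum>out\<in>qcarrier R (Suc 0). outcome_prob (qcarrier R (Suc 0)) g (circ R j) out / real (Mk n) * ind_halt ((circ R j, out) # h')) \<partial>count_space UNIV)"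
    by (rule Lay_Suc[OF R]) (simp add: ind_halt_def)
  also have "\<dots> = (\<integral>\<^sup>+ h'. indicator {h. length h = n} h' * (ennreal (HP R g h') * ennreal (ind_alive h')) * ennreal (pp R g n) \<partial>count_space UNIV)"
    by (intro nn_integral_cong) (simp only: e, simp add: ind_alive_def)
  also have "\<dots> = Lay R g n ind_alive * ennreal (pp R g n)"
    unfolding Lay_def by (rule nn_integral_multc) simp
  finally show ?thesis .
qed

lemma Lay_add:
  assumes "\<And>h. 0 \<le> \<phi>1 h" "\<And>h. 0 \<le> \<phi>2 h"
  shows "Lay R g n (\<lambda>h. \<phi>1 h + \<phi>2 h) = Lay R g n \<phi>1 + Lay R g n \<phi>2"
proof -
  have "Lay R g n (\<lambda>h. \<phi>1 h + \<phi>2 h) = (\<integral>\<^sup>+ h. indicator {h. length h = n} h * (ennreal (HP R g h) * ennreal (\<phi>1 h))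
       + indicator {h. length h = n} h * (ennreal (HP R g h) * ennreal (\<phi>2 h)) \<partial>count_space UNIV)"
    unfolding Lay_def using assms by (intro nn_integral_cong) (simp add: ennreal_plus distrib_left)
  also have "\<dots> = Lay R g n \<phi>1 + Lay R g n \<phi>2"
    unfolding Lay_def by (rule nn_integral_add) simp_all
  finally show ?thesis .
qed

lemma Lay_cost_Suc:
  assumes R: "finite R" "card R > 0"
  shows "Lay R g (Suc n) (\<lambda>h. real (hist_cost h)) = Lay R g n ind_alive * ennreal (cc n) + Lay R g n hc_alive"
proof -
  have e: "(\<Sum>j<Mk n. \<Sum>out\<in>qcarrier R (Suc 0). outcome_prob (qcarrier R (Suc 0)) g (circ R j) out / real (Mk n) * real (hist_cost ((circ R j, out) # h')))
      = cc n + real (hist_cost h')" for h'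
  proof -
    have "(\<Sum>j<Mk n. \<Sum>out\<in>qcarrier R (Suc 0). outcome_prob (qcarrier R (Suc 0)) g (circ R j) out / real (Mk n) * real (hist_cost ((circ R j, out) # h')))
      = (\<Sum>j<Mk n. \<Sum>out\<in>qcarrier R (Suc 0). outcome_prob (qcarrier R (Suc 0)) g (circ R j) out / real (Mk n) * (real j + 2 + real (hist_cost h')))"
      by (intro sum.cong refl) (simp add: hist_cost_Cons queries_circ algebra_simps)
    also have "\<dots> = (\<Sum>j<Mk n. (real j + 2 + real (hist_cost h')) / real (Mk n))"
      by (rule sum_total_j[OF R])
    also have "\<dots> = (\<Sum>j<Mk n. (real j + 2) / real (Mk n)) + (\<Sum>j<Mk n. real (hist_cost h') / real (Mk n))"
      by (simp add: add_divide_distrib sum.distrib)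
    also have "\<dots> = cc n + real (hist_cost h')"
      using Mk_pos[of n] by (simp add: cc_def sum_divide_distrib)
    finally show ?thesis .
  qed
  have "Lay R g (Suc n) (\<lambda>h. real (hist_cost h)) = (\<integral>\<^sup>+ h'. indicator {h. length h = n} h' * (ennreal (HP R g h') * (if alive h' then 1 else 0)) *
      ennreal (\<Sum>j<Mk n. \<Sum>out\<in>qcarrier R (Suc 0). outcome_prob (qcarrier R (Suc 0)) g (circ R j) out / real (Mk n) * real (hist_cost ((circ R j, out) # h'))) \<partial>count_space UNIV)"
    by (rule Lay_Suc[OF R]) simp
  also have "\<dots> = (\<integral>\<^sup>+ h'. indicator {h. length h = n} h' * (ennreal (HP R g h') * ennreal (ind_alive h')) * ennreal (cc n)
       + indicator {h. length h = n} h' * (ennreal (HP R g h') * ennreal (hc_alive h')) \<partial>count_space UNIV)"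
  proof (intro nn_integral_cong)
    fix h' :: history
    have cc0: "0 \<le> cc n" using Mk_pos[of n] by (simp add: cc_def sum_nonneg)
    show "indicator {h. length h = n} h' * (ennreal (HP R g h') * (if alive h' then 1 else 0)) *
      ennreal (\<Sum>j<Mk n. \<Sum>out\<in>qcarrier R (Suc 0). outcome_prob (qcarrier R (Suc 0)) g (circ R j) out / real (Mk n) * real (hist_cost ((circ R j, out) # h')))
      = indicator {h. length h = n} h' * (ennreal (HP R g h') * ennreal (ind_alive h')) * ennreal (cc n)
       + indicator {h. length h = n} h' * (ennreal (HP R g h') * ennreal (hc_alive h'))"
      unfolding e using cc0
      by (simp add: ind_alive_def hc_alive_def ennreal_plus distrib_left distrib_right mult.assoc)
  qed
  also have "\<dots> = Lay R g n ind_alive * ennreal (cc n) + Lay R g n hc_alive"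
    unfolding Lay_def by (subst nn_integral_add) (simp_all add: nn_integral_multc)
  finally show ?thesis .
qed

lemma cost_split: "real (hist_cost h) = hc_alive h + hc_halt h"
  by (simp add: hc_alive_def hc_halt_def ind_alive_def ind_halt_def)

lemma Lay_cost_Suc':
  assumes R: "finite R" "card R > 0"
  shows "Lay R g (Suc n) hc_alive + Lay R g (Suc n) hc_halt = Lay R g n ind_alive * ennreal (cc n) + Lay R g n hc_alive"
proof -
  have "Lay R g (Suc n) hc_alive + Lay R g (Suc n) hc_halt = Lay R g (Suc n) (\<lambda>h. hc_alive h + hc_halt h)"
    by (rule Lay_add[symmetric]) (simp_all add: hc_alive_def hc_halt_def ind_alive_def ind_halt_def)
  also have "(\<lambda>h. hc_alive h + hc_halt h) = (\<lambda>h. real (hist_cost h))" by (simp add: cost_split)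
  finally show ?thesis using Lay_cost_Suc[OF R] by simp
qed

lemma Lay_alive_eq:
  assumes R: "finite R" "card R > 0"
  shows "Lay R g n ind_alive = ennreal (aa R g n)"
proof (induction n)
  case 0 then show ?case by (simp add: Lay_zero ind_alive_def alive_def aa_def)
next
  case (Suc n)
  have "0 \<le> aa R g n" unfolding aa_def using pp_range by (intro prod_nonneg) auto
  then show ?case using pp_range[of R g n]
    by (simp add: Lay_alive_Suc[OF R] Suc aa_def ennreal_mult[symmetric] prod_nonneg)
qed

lemma cost_partial:
  assumes R: "finite R" "card R > 0"
  shows "(\<Sum>k<Suc n. Lay R g k hc_halt) + Lay R g n hc_alive = ennreal (\<Sum>k<n. aa R g k * cc k)"
proof (induction n)
  case 0 then show ?case by (simp add: Lay_zero hc_halt_def hc_alive_def ind_halt_def alive_def hist_cost_def)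
next
  case (Suc n)
  have nn: "0 \<le> aa R g k * cc k" for k
  proof -
    have "0 \<le> aa R g k" unfolding aa_def using pp_range by (intro prod_nonneg) auto
    moreover have "0 \<le> cc k" using Mk_pos[of k] by (simp add: cc_def sum_nonneg)
    ultimately show ?thesis by simp
  qed
  have "(\<Sum>k<Suc (Suc n). Lay R g k hc_halt) + Lay R g (Suc n) hc_alive
      = (\<Sum>k<Suc n. Lay R g k hc_halt) + (Lay R g (Suc n) hc_alive + Lay R g (Suc n) hc_halt)"
    by (simp only: sum.lessThan_Suc[of _ "Suc n"] add_ac)
  also have "\<dots> = ((\<Sum>k<Suc n. Lay R g k hc_halt) + Lay R g n hc_alive) + Lay R g n ind_alive * ennreal (cc n)"
    by (simp only: Lay_cost_Suc'[OF R] add_ac)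
  also have "\<dots> = ennreal (\<Sum>k<n. aa R g k * cc k) + Lay R g n ind_alive * ennreal (cc n)"
    by (simp only: Suc.IH)
  also have "\<dots> = ennreal (\<Sum>k<n. aa R g k * cc k) + ennreal (aa R g n * cc n)"
  proof -
    have "0 \<le> cc n" using Mk_pos[of n] by (simp add: cc_def sum_nonneg)
    then show ?thesis by (simp add: Lay_alive_eq[OF R] ennreal_mult'')
  qed
  also have "\<dots> = ennreal (\<Sum>k<Suc n. aa R g k * cc k)"
    using nn by (simp add: ennreal_plus sum_nonneg)
  finally show ?case .
qed



lemma geom_bound: "(\<Sum>i<k. (9/10::real) ^ i) \<le> 10"
proof -
  have "(\<Sum>i<k. (9/10::real) ^ i) = (1 - (9/10)^k) / (1 - 9/10)"
    by (simp add: sum_gp_strict)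
  also have "\<dots> \<le> 10" by simp
  finally show ?thesis .
qed

lemma left_sum_bound:
  "(\<Sum>n<N. if n < m then (9/10::real) ^ (m - n) else 0) \<le> 10"
proof -
  have "(\<Sum>n<N. if n < m then (9/10::real) ^ (m - n) else 0) \<le> (\<Sum>n<max N m. if n < m then (9/10::real) ^ (m - n) else 0)"
    by (intro sum_mono2) auto
  also have "\<dots> = (\<Sum>n<m. (9/10::real) ^ (m - n))"
    by (rule sum.mono_neutral_cong_right) auto
  also have "\<dots> = (\<Sum>i<m. (9/10::real) ^ (m - (m - Suc i)))"
    by (rule sum.nat_diff_reindex[symmetric])
  also have "\<dots> = (\<Sum>i<m. (9/10::real) ^ Suc i)"
    by (intro sum.cong refl) (simp add: Suc_diff_Suc)
  also have "\<dots> \<le> (\<Sum>i<m. (9/10::real) ^ i)"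
    by (intro sum_mono) (simp add: power_decreasing)
  also have "\<dots> \<le> 10" by (rule geom_bound)
  finally show ?thesis .
qed

lemma right_sum_bound:
  "(\<Sum>n<N. if m \<le> n then (9/10::real) ^ (n - m) else 0) \<le> 10"
proof (cases "m \<le> N")
  case True
  have "(\<Sum>n<N. if m \<le> n then (9/10::real) ^ (n - m) else 0) = (\<Sum>n\<in>{m..<N}. (9/10::real) ^ (n - m))"
    by (rule sum.mono_neutral_cong_right) auto
  also have "\<dots> = (\<Sum>i<N - m. (9/10::real) ^ i)"
  proof -
    have "(\<Sum>n\<in>{m..<N}. (9/10::real) ^ (n - m)) = (\<Sum>i\<in>{0..<N - m}. (9/10::real) ^ (i + m - m))"
      using True by (subst sum.shift_bounds_nat_ivl[symmetric]) simp
    then show ?thesis by (simp add: atLeast0LessThan)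
  qed
  also have "\<dots> \<le> 10" by (rule geom_bound)
  finally show ?thesis .
next
  case False
  then have "(\<Sum>n<N. if m \<le> n then (9/10::real) ^ (n - m) else 0) = 0"
    by (intro sum.neutral) auto
  then show ?thesis by simp
qed

lemma Mk_left:
  assumes "n < 4 * s0"
  shows "real (Mk n) \<le> 2 ^ s0 * (9/10) ^ (4 * s0 - n)"
proof -
  define d where "d = s0 - n div 4"
  have s0: "s0 = n div 4 + d" using assms by (simp add: d_def)
  have le: "4 * s0 - n \<le> 4 * d" using s0 by simp
  have "((1/2)::real) ^ d \<le> ((9/10)^4) ^ d" by (intro power_mono) (auto simp: power_divide)
  also have "\<dots> = (9/10) ^ (4 * d)" by (simp add: power_mult)
  also have "\<dots> \<le> (9/10) ^ (4 * s0 - n)" using le by (intro power_decreasing) auto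
  finally have "((1/2)::real) ^ d \<le> (9/10) ^ (4 * s0 - n)" .
  then have "2 ^ s0 * ((1/2)::real) ^ d \<le> 2 ^ s0 * (9/10) ^ (4 * s0 - n)" by simp
  moreover have "2 ^ s0 * ((1/2)::real) ^ d = 2 ^ (n div 4)"
    unfolding s0 by (simp add: power_add power_divide)
  ultimately show ?thesis by (simp add: Mk_def)
qed

lemma Mk_right:
  assumes "4 * s0 \<le> n"
  shows "real (Mk n) \<le> 2 ^ s0 * (6/5) ^ (n - 4 * s0)"
proof -
  define d where "d = n div 4 - s0"
  have s0: "n div 4 = s0 + d" using assms by (simp add: d_def)
  have le: "4 * d \<le> n - 4 * s0" using s0 by simp
  have "(2::real) ^ d \<le> ((6/5)^4) ^ d" by (intro power_mono) (auto simp: power_divide)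
  also have "\<dots> = (6/5) ^ (4 * d)" by (simp add: power_mult)
  also have "\<dots> \<le> (6/5) ^ (n - 4 * s0)" using le by (intro power_increasing) auto
  finally have "(2::real) ^ d \<le> (6/5) ^ (n - 4 * s0)" .
  then have "2 ^ s0 * (2::real) ^ d \<le> 2 ^ s0 * (6/5) ^ (n - 4 * s0)" by simp
  then show ?thesis by (simp add: Mk_def s0 power_add)
qed

lemma cc_bounds: "2 \<le> cc n" "cc n \<le> 2 * real (Mk n)"
proof -
  have M: "real (Mk n) > 0" using Mk_pos[of n] by simp
  have "(\<Sum>j<Mk n. (2::real)) \<le> (\<Sum>j<Mk n. real j + 2)" by (intro sum_mono) auto
  then show "2 \<le> cc n" using M by (simp add: cc_def field_simps)
  have "(\<Sum>j<Mk n. real j + 2) \<le> (\<Sum>j<Mk n. 2 * real (Mk n))"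
  proof (intro sum_mono)
    fix j assume "j \<in> {..<Mk n}"
    then have "real j + 1 \<le> real (Mk n)" by simp
    then show "real j + 2 \<le> 2 * real (Mk n)" using M by linarith
  qed
  then show "cc n \<le> 2 * real (Mk n)" using M by (simp add: cc_def field_simps)
qed

locale seqs =
  fixes p :: "nat \<Rightarrow> real" and s0 :: nat
  assumes p0: "\<And>n. 0 \<le> p n" and p1: "\<And>n. p n \<le> 1"
    and pbig: "\<And>n. s0 \<le> n div 4 \<Longrightarrow> 1/4 \<le> p n"
begin

definition a :: "nat \<Rightarrow> real" where "a n = (\<Prod>k<n. 1 - p k)"

lemma a_nonneg: "0 \<le> a n" unfolding a_def using p1 by (intro prod_nonneg) (auto simp: algebra_simps)
lemma a_le1: "a n \<le> 1" unfolding a_def using p0 p1 by (intro prod_le_1) (auto simp: algebra_simps)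

lemma a_decay: "a n \<le> (3/4) ^ (n - 4 * s0)"
proof (induction n)
  case 0 then show ?case by (simp add: a_def)
next
  case (Suc n)
  have as: "a (Suc n) = a n * (1 - p n)" by (simp add: a_def)
  show ?case
  proof (cases "4 * s0 \<le> n")
    case True
    then have "1/4 \<le> p n" by (intro pbig) auto
    then have "a n * (1 - p n) \<le> (3/4)^(n - 4 * s0) * (3/4)"
      using Suc a_nonneg[of n] p1[of n] by (intro mult_mono) auto
    also have "\<dots> = (3/4) ^ (Suc n - 4 * s0)" using True by (simp add: Suc_diff_le)
    finally show ?thesis using as by simp
  next
    case False
    have "a n * (1 - p n) \<le> 1 * 1" using a_le1[of n] a_nonneg[of n] p0[of n] p1[of n]
      by (intro mult_mono) auto
    then show ?thesis using as False by simp
  qed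
qed

lemma term_bound: "a n * cc n \<le> 2 * 2 ^ s0 * (if n < 4 * s0 then (9/10) ^ (4 * s0 - n) else 0)
   + 2 * 2 ^ s0 * (if 4 * s0 \<le> n then (9/10) ^ (n - 4 * s0) else 0)"
proof (cases "n < 4 * s0")
  case True
  have "a n * cc n \<le> 1 * (2 * real (Mk n))"
    using a_le1[of n] a_nonneg[of n] cc_bounds[of n] by (intro mult_mono) auto
  also have "\<dots> \<le> 2 * (2 ^ s0 * (9/10) ^ (4 * s0 - n))" using Mk_left[OF True] by simp
  finally show ?thesis using True by simp
next
  case False
  then have le: "4 * s0 \<le> n" by simp
  have "a n * cc n \<le> (3/4) ^ (n - 4 * s0) * (2 * (2 ^ s0 * (6/5) ^ (n - 4 * s0)))"
    using a_decay[of n] a_nonneg[of n] cc_bounds[of n] Mk_right[OF le] by (intro mult_mono) auto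
  also have "\<dots> = 2 * 2 ^ s0 * ((3/4) * (6/5)) ^ (n - 4 * s0)" unfolding power_mult_distrib by simp
  also have "\<dots> = 2 * 2 ^ s0 * (9/10) ^ (n - 4 * s0)" by simp
  finally show ?thesis using le by simp
qed

lemma partial_bound: "(\<Sum>n<N. a n * cc n) \<le> 40 * 2 ^ s0"
proof -
  have "(\<Sum>n<N. a n * cc n) \<le> (\<Sum>n<N. 2 * 2 ^ s0 * (if n < 4 * s0 then (9/10) ^ (4 * s0 - n) else 0)
   + 2 * 2 ^ s0 * (if 4 * s0 \<le> n then (9/10) ^ (n - 4 * s0) else 0))"
    by (intro sum_mono term_bound)
  also have "\<dots> = 2 * 2 ^ s0 * (\<Sum>n<N. if n < 4 * s0 then (9/10::real) ^ (4 * s0 - n) else 0)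
     + 2 * 2 ^ s0 * (\<Sum>n<N. if 4 * s0 \<le> n then (9/10::real) ^ (n - 4 * s0) else 0)"
    by (simp add: sum.distrib sum_distrib_left)
  also have "\<dots> \<le> 2 * 2 ^ s0 * 10 + 2 * 2 ^ s0 * 10"
    by (intro add_mono mult_left_mono left_sum_bound right_sum_bound) auto
  finally show ?thesis by simp
qed

lemma a_tendsto: "a \<longlonglongrightarrow> 0"
proof -
  have "summable a"
  proof (rule summableI_nonneg_bounded)
    show "0 \<le> a n" for n by (rule a_nonneg)
    show "(\<Sum>i<n. a i) \<le> 40 * 2 ^ s0" for n
    proof -
      have "(\<Sum>i<n. a i) \<le> (\<Sum>i<n. a i * cc i)"
      proof (intro sum_mono)
        fix i
        have "a i * 1 \<le> a i * cc i" using a_nonneg[of i] cc_bounds(1)[of i] by (intro mult_left_mono) auto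
        then show "a i \<le> a i * cc i" by simp
      qed
      also have "\<dots> \<le> 40 * 2 ^ s0" by (rule partial_bound)
      finally show ?thesis .
    qed
  qed
  then show ?thesis by (rule summable_LIMSEQ_zero)
qed

lemma a_telescope: "(\<Sum>k<n. a k * p k) = 1 - a n"
  by (induction n) (simp_all add: a_def algebra_simps)

end



lemma inner_halt:
  assumes X: "0 \<le> X"
  shows "(\<integral>\<^sup>+ r. ennreal (halt_prob (qcarrier R (Suc 0)) g (strat R) h r * X) \<partial>count_space UNIV)
       = ennreal (HP R g h) * ennreal (ind_halt h * X)"
proof (cases "alive h")
  case True
  then show ?thesis by (simp add: halt_prob_def strat_def pmf_trial_Halt ind_halt_def)
next
  case False
  define r0 where "r0 = fst (snd (hd h))"
  have "(\<integral>\<^sup>+ r. ennreal (halt_prob (qcarrier R (Suc 0)) g (strat R) h r * X) \<partial>count_space UNIV)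
      = (\<integral>\<^sup>+ r. ennreal (HP R g h * X) * indicator {r0} r \<partial>count_space UNIV)"
    using False by (intro nn_integral_cong) (auto simp: halt_prob_def strat_def r0_def indicator_def)
  also have "\<dots> = ennreal (HP R g h * X)"
    by (simp add: nn_integral_count_space_indicator[symmetric] nn_integral_count_space_finite)
  finally show ?thesis using False X by (simp add: ind_halt_def ennreal_mult HP_nonneg)
qed

lemma halt_integral:
  assumes X: "\<And>h. 0 \<le> X h"
  shows "(\<integral>\<^sup>+ hr. ennreal (halt_prob (qcarrier R (Suc 0)) g (strat R) (fst hr) (snd hr) * X (fst hr)) \<partial>count_space UNIV)
     = (\<Sum>n. Lay R g n (\<lambda>h. ind_halt h * X h))"
proof -
  have "(\<integral>\<^sup>+ hr. ennreal (halt_prob (qcarrier R (Suc 0)) g (strat R) (fst hr) (snd hr) * X (fst hr)) \<partial>count_space UNIV)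
      = (\<integral>\<^sup>+ h. \<integral>\<^sup>+ r. ennreal (halt_prob (qcarrier R (Suc 0)) g (strat R) h r * X h) \<partial>count_space UNIV \<partial>count_space UNIV)"
    using nn_integral_fst_count_space[of "\<lambda>hr. ennreal (halt_prob (qcarrier R (Suc 0)) g (strat R) (fst hr) (snd hr) * X (fst hr))"]
    by simp
  also have "\<dots> = (\<integral>\<^sup>+ h. ennreal (HP R g h) * ennreal (ind_halt h * X h) \<partial>count_space UNIV)"
    by (intro nn_integral_cong inner_halt X)
  also have "\<dots> = (\<Sum>n. Lay R g n (\<lambda>h. ind_halt h * X h))"
    unfolding Lay_def by (rule nn_integral_layers)
  finally show ?thesis .
qed

lemma Lay_halt_zero: "Lay R g 0 ind_halt = 0"
  by (simp add: Lay_zero ind_halt_def alive_def)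

lemma main_f:
  assumes R: "finite R" and t: "card {r\<in>R. g r} > 0"
  shows "finds R (qcarrier R (Suc 0)) g (strat R)"
    and "expected_queries (qcarrier R (Suc 0)) g (strat R)
           \<le> ennreal (80 * sqrt (real (card R) / real (card {r\<in>R. g r})))"
proof -
  have le: "card {r\<in>R. g r} \<le> card R" using R by (intro card_mono) auto
  then have Rpos: "card R > 0" using t by simp
  note R2 = R Rpos
  define \<theta> where "\<theta> = gtheta R g"
  have th: "0 < \<theta>" "\<theta> \<le> pi / 2" and sth: "sin \<theta> = sqrt (real (card {r\<in>R. g r}) / real (card R))"
    using gtheta_range[OF R t] by (simp_all add: \<theta>_def)
  have spos: "sin \<theta> > 0" using sth t Rpos by simp
  have sle: "sin \<theta> \<le> 1" by simp
  have ex: "\<exists>s. 1 \<le> 2 ^ s * sin \<theta>"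
  proof -
    obtain s where "1 / sin \<theta> < 2 ^ s" using real_arch_pow[of 2 "1 / sin \<theta>"] by auto
    then have "1 \<le> 2 ^ s * sin \<theta>" using spos by (simp add: field_simps)
    then show ?thesis by blast
  qed
  define s0 where "s0 = (LEAST s. 1 \<le> 2 ^ s * sin \<theta>)"
  have s0: "1 \<le> 2 ^ s0 * sin \<theta>" unfolding s0_def by (rule LeastI_ex[OF ex])
  have s0b: "2 ^ s0 \<le> 2 / sin \<theta>"
  proof (cases s0)
    case 0
    have "sin \<theta> \<le> 2" using sin_le_one[of \<theta>] by linarith
    then show ?thesis using spos 0 by (simp add: field_simps)
  next
    case (Suc s)
    then have "\<not> 1 \<le> 2 ^ s * sin \<theta>" using not_less_Least[of s "\<lambda>s. 1 \<le> 2 ^ s * sin \<theta>"] by (simp add: s0_def)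
    then have "2 ^ s * sin \<theta> < 1" by simp
    then have "2 ^ s0 * sin \<theta> < 2" using Suc by simp
    then show ?thesis using spos by (simp add: field_simps)
  qed
  interpret seqs "pp R g" s0
  proof
    show "0 \<le> pp R g n" "pp R g n \<le> 1" for n by (rule pp_range)+
    fix n assume "s0 \<le> n div 4"
    then have "(2::real) ^ s0 \<le> 2 ^ (n div 4)" by (intro power_increasing) auto
    then have "(2::real) ^ s0 \<le> real (Mk n)" by (simp add: Mk_def)
    then have "2 ^ s0 * sin \<theta> \<le> real (Mk n) * sin \<theta>" using spos by (intro mult_right_mono) auto
    then have "1 \<le> real (Mk n) * sin \<theta>" using s0 by linarith
    then have "real (Mk n) / 4 \<le> psum \<theta> (Mk n)" using th by (intro psum_bound) auto
    then show "1/4 \<le> pp R g n" using Mk_pos[of n] by (simp add: pp_def \<theta>_def field_simps)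
  qed
  have aeq: "aa R g n = a n" for n by (simp add: aa_def a_def)
  define l where "l n = (case n of 0 \<Rightarrow> 0 | Suc m \<Rightarrow> a m * pp R g m)" for n
  have Lh: "Lay R g n ind_halt = ennreal (l n)" for n
    by (cases n) (simp_all add: l_def Lay_halt_zero Lay_halt_Suc[OF R2] Lay_alive_eq[OF R2] aeq ennreal_mult' a_nonneg)
  have l0: "0 \<le> l n" for n by (cases n) (simp_all add: l_def a_nonneg pp_range)
  have lp: "(\<Sum>k<Suc n. l k) = 1 - a n" for n
    by (simp add: l_def sum.lessThan_Suc_shift a_telescope del: sum.lessThan_Suc)
  have "(\<lambda>n. \<Sum>k<Suc n. l k) \<longlonglongrightarrow> 1 - 0" unfolding lp by (intro tendsto_diff tendsto_const a_tendsto)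
  then have "(\<lambda>n. \<Sum>k<Suc n. l k) \<longlonglongrightarrow> 1" by simp
  then have "(\<lambda>n. \<Sum>k<n. l k) \<longlonglongrightarrow> 1" by (rule LIMSEQ_imp_Suc)
  then have lsum: "l sums 1" by (simp add: sums_def)
  have halt1: "(\<integral>\<^sup>+ hr. ennreal (halt_prob (qcarrier R (Suc 0)) g (strat R) (fst hr) (snd hr)) \<partial>count_space UNIV) = 1"
  proof -
    have "(\<integral>\<^sup>+ hr. ennreal (halt_prob (qcarrier R (Suc 0)) g (strat R) (fst hr) (snd hr)) \<partial>count_space UNIV)
        = (\<integral>\<^sup>+ hr. ennreal (halt_prob (qcarrier R (Suc 0)) g (strat R) (fst hr) (snd hr) * (\<lambda>_. 1) (fst hr)) \<partial>count_space UNIV)"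
      by simp
    also have "\<dots> = (\<Sum>n. Lay R g n (\<lambda>h. ind_halt h * 1))" by (rule halt_integral) simp
    also have "\<dots> = (\<Sum>n. ennreal (l n))" by (simp add: Lh)
    also have "\<dots> = 1"
    proof -
      have "(\<lambda>n. ennreal (l n)) sums ennreal 1" using lsum l0 by (subst sums_ennreal) auto
      then show ?thesis by (simp add: sums_iff)
    qed
    finally show ?thesis .
  qed
  have pos: "r \<in> R \<and> g r" if hp: "halt_prob (qcarrier R (Suc 0)) g (strat R) h r > 0" for h r
  proof -
    have hp': "HP R g h * pmf (strat R h) (Halt r) > 0" using hp by (simp add: halt_prob_def)
    then have na: "\<not> alive h" by (auto simp: strat_def pmf_trial_Halt)
    then obtain c r' b w h' where h: "h = (c, r', b, w) # h'" by (cases h) (auto simp: alive_def)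
    then have b: "\<not> b" using na by (simp add: alive_def)
    have "pmf (strat R h) (Halt r) > 0" using hp' HP_nonneg[of "qcarrier R (Suc 0)" g "strat R" h]
      by (simp add: zero_less_mult_iff)
    then have rr: "r = r'" using na h by (simp add: strat_def indicator_def split: if_splits)
    have "HP R g h > 0" using hp' HP_nonneg[of "qcarrier R (Suc 0)" g "strat R" h] pmf_nonneg[of "strat R h" "Halt r"]
      by (simp add: zero_less_mult_iff)
    then have "HP R g h' * pmf (strat R h') (Run c) * outcome_prob (qcarrier R (Suc 0)) g c (r', b, w) > 0" using h by simp
    then have p1: "pmf (strat R h') (Run c) > 0" and p2: "outcome_prob (qcarrier R (Suc 0)) g c (r', b, w) > 0"
      using HP_nonneg[of "qcarrier R (Suc 0)" g "strat R" h'] pmf_nonneg[of "strat R h'" "Run c"] outcome_prob_nonneg[of "qcarrier R (Suc 0)" g c "(r', b, w)"]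
      by (auto simp: zero_less_mult_iff)
    from p1 have "c \<in> circ R ` {..<Mk (length h')}"
      by (auto simp: strat_def pmf_trial_Run split: if_splits)
    then obtain j where c: "c = circ R j" by auto
    show ?thesis using op_pos[OF R2, of g j r' w] p2 b rr c by simp
  qed
  show "finds R (qcarrier R (Suc 0)) g (strat R)"
    unfolding finds_def using halt1 pos by blast
  have eq: "expected_queries (qcarrier R (Suc 0)) g (strat R) = (\<Sum>n. Lay R g n hc_halt)"
  proof -
    have e: "(\<lambda>h. ind_halt h * real (hist_cost h)) = hc_halt" by (simp add: fun_eq_iff hc_halt_def)
    show ?thesis unfolding expected_queries_def
      by (subst halt_integral) (simp_all add: e)
  qed
  have "(\<Sum>n. Lay R g n hc_halt) \<le> ennreal (40 * 2 ^ s0)"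
  proof (rule suminf_le_const)
    show "summable (\<lambda>n. Lay R g n hc_halt)" by simp
    fix n
    have "(\<Sum>k<n. Lay R g k hc_halt) \<le> (\<Sum>k<Suc n. Lay R g k hc_halt) + Lay R g n hc_alive"
      by (simp add: add.assoc add_increasing2)
    also have "\<dots> = ennreal (\<Sum>k<n. aa R g k * cc k)" by (rule cost_partial[OF R2])
    also have "\<dots> \<le> ennreal (40 * 2 ^ s0)" using partial_bound[of n] by (simp add: aeq)
    finally show "(\<Sum>k<n. Lay R g k hc_halt) \<le> ennreal (40 * 2 ^ s0)" .
  qed
  also have "ennreal (40 * 2 ^ s0) \<le> ennreal (80 * sqrt (real (card R) / real (card {r\<in>R. g r})))"
  proof (rule ennreal_leI)
    have "40 * 2 ^ s0 \<le> 40 * (2 / sin \<theta>)" using s0b by simp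
    also have "2 / sin \<theta> = 2 * sqrt (real (card R) / real (card {r\<in>R. g r}))"
      unfolding sth by (simp add: real_sqrt_divide field_simps)
    finally show "40 * 2 ^ s0 \<le> 80 * sqrt (real (card R) / real (card {r\<in>R. g r}))" by simp
  qed
  finally show "expected_queries (qcarrier R (Suc 0)) g (strat R) \<le> ennreal (80 * sqrt (real (card R) / real (card {r\<in>R. g r})))"
    using eq by simp
qed



lemma sqrt_avg:
  assumes F: "finite F" and P: "\<And>f. f \<in> F \<Longrightarrow> 0 \<le> P f" and x: "\<And>f. f \<in> F \<Longrightarrow> 0 \<le> x f"
    and P1: "(\<Sum>f\<in>F. P f) = 1"
  shows "(\<Sum>f\<in>F. P f * sqrt (x f)) \<le> sqrt (\<Sum>f\<in>F. P f * x f)"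
proof (cases "(\<Sum>f\<in>F. P f * x f) = 0")
  case True
  then have "\<forall>f\<in>F. P f * x f = 0" using F P x by (subst sum_nonneg_eq_0_iff[symmetric]) auto
  then have "\<forall>f\<in>F. P f * sqrt (x f) = 0" by auto
  then have "(\<Sum>f\<in>F. P f * sqrt (x f)) = 0" by (intro sum.neutral) auto
  then show ?thesis using True by simp
next
  case False
  define S where "S = (\<Sum>f\<in>F. P f * x f)"
  have "0 \<le> S" unfolding S_def using P x by (intro sum_nonneg) auto
  then have S0: "S > 0" using False by (simp add: S_def)
  define a where "a = sqrt S"
  have a0: "a > 0" using S0 by (simp add: a_def)
  have amg: "sqrt y \<le> (y / a + a) / 2" if "0 \<le> y" for y
  proof -
    have "0 \<le> (sqrt y - a)\<^sup>2" by simp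
    then have "2 * a * sqrt y \<le> y + a\<^sup>2" using that by (simp add: power2_eq_square algebra_simps)
    then show ?thesis using a0 by (simp add: field_simps power2_eq_square)
  qed
  have "(\<Sum>f\<in>F. P f * sqrt (x f)) \<le> (\<Sum>f\<in>F. P f * ((x f / a + a) / 2))"
    using P x amg by (intro sum_mono mult_left_mono) auto
  also have "\<dots> = (\<Sum>f\<in>F. (P f * x f) / (2 * a) + P f * (a / 2))"
    using a0 by (intro sum.cong refl) (simp add: field_simps)
  also have "\<dots> = S / (2 * a) + (\<Sum>f\<in>F. P f) * (a / 2)"
    by (simp add: sum.distrib sum_divide_distrib[symmetric] sum_distrib_right S_def)
  also have "\<dots> = S / (2 * a) + a / 2" using P1 by simp
  also have "S = a * a" using S0 by (simp add: a_def)
  also have "a * a / (2 * a) + a / 2 = a" using a0 by simp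
  finally show ?thesis by (simp add: a_def S_def)
qed

theorem theorem4:
  shows "\<exists>c>0. \<forall>(X::nat set) (R::nat set) (F::(nat \<Rightarrow> bool) set) (P::(nat \<Rightarrow> bool) \<Rightarrow> real)
            (G::(nat \<Rightarrow> bool) \<Rightarrow> nat \<Rightarrow> nat).
     finite X \<and> finite R \<and> finite F \<and>
     (\<forall>f\<in>F. \<forall>x. x \<notin> X \<longrightarrow> \<not> f x) \<and>
     (\<forall>f\<in>F. P f \<ge> 0) \<and> (\<Sum>f\<in>F. P f) = 1 \<and>
     (\<forall>f\<in>F. \<forall>r\<in>R. G f r \<in> X) \<and>
     (\<forall>f\<in>F. P f > 0 \<longrightarrow> card {r\<in>R. f (G f r)} > 0)
     \<longrightarrow>
     (\<exists>(m::nat) (\<sigma>::strategy).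
        valid_strategy (qcarrier R m) \<sigma> \<and>
        (\<forall>f\<in>F. P f > 0 \<longrightarrow> finds R (qcarrier R m) (\<lambda>r. f (G f r)) \<sigma>) \<and>
        (\<Sum>f\<in>F. ennreal (P f) * expected_queries (qcarrier R m) (\<lambda>r. f (G f r)) \<sigma>)
          \<le> ennreal (c * sqrt (\<Sum>f\<in>F. P f * real (card R) / real (card {r\<in>R. f (G f r)}))))"
proof (intro exI[of _ "80::real"] conjI allI impI)
  show "(0::real) < 80" by simp
  fix X R :: "nat set" and F :: "(nat \<Rightarrow> bool) set" and P :: "(nat \<Rightarrow> bool) \<Rightarrow> real" and G :: "(nat \<Rightarrow> bool) \<Rightarrow> nat \<Rightarrow> nat"
  assume H: "finite X \<and> finite R \<and> finite F \<and>
     (\<forall>f\<in>F. \<forall>x. x \<notin> X \<longrightarrow> \<not> f x) \<and>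
     (\<forall>f\<in>F. P f \<ge> 0) \<and> (\<Sum>f\<in>F. P f) = 1 \<and>
     (\<forall>f\<in>F. \<forall>r\<in>R. G f r \<in> X) \<and>
     (\<forall>f\<in>F. P f > 0 \<longrightarrow> card {r\<in>R. f (G f r)} > 0)"
  then have R: "finite R" and F: "finite F" and P0: "\<And>f. f \<in> F \<Longrightarrow> 0 \<le> P f" and P1: "(\<Sum>f\<in>F. P f) = 1"
    and Pt: "\<And>f. f \<in> F \<Longrightarrow> P f > 0 \<Longrightarrow> card {r\<in>R. f (G f r)} > 0"
    by auto
  obtain f0 where f0: "f0 \<in> F" "P f0 > 0"
  proof (rule ccontr)
    assume "\<not> thesis"
    with that have "\<forall>f\<in>F. P f \<le> 0" by (meson not_le)
    then have "(\<Sum>f\<in>F. P f) \<le> 0" by (intro sum_nonpos) auto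
    then show False using P1 by simp
  qed
  have "card {r\<in>R. f0 (G f0 r)} > 0" using Pt f0 by simp
  then have "R \<noteq> {}" by auto
  then have Rpos: "card R > 0" using R by (simp add: card_gt_0_iff)
  define N where "N = real (card R)"
  define tt where "tt f = real (card {r\<in>R. f (G f r)})" for f
  show "\<exists>(m::nat) (\<sigma>::strategy).
        valid_strategy (qcarrier R m) \<sigma> \<and>
        (\<forall>f\<in>F. P f > 0 \<longrightarrow> finds R (qcarrier R m) (\<lambda>r. f (G f r)) \<sigma>) \<and>
        (\<Sum>f\<in>F. ennreal (P f) * expected_queries (qcarrier R m) (\<lambda>r. f (G f r)) \<sigma>)
          \<le> ennreal (80 * sqrt (\<Sum>f\<in>F. P f * real (card R) / real (card {r\<in>R. f (G f r)})))"
  proof (intro exI conjI ballI impI)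
    show "valid_strategy (qcarrier R (Suc 0)) (strat R)" by (rule valid_strat[OF R Rpos])
    show "finds R (qcarrier R (Suc 0)) (\<lambda>r. f (G f r)) (strat R)" if "f \<in> F" "P f > 0" for f
      using main_f(1)[OF R, of "\<lambda>r. f (G f r)"] Pt[OF that] by simp
    have "(\<Sum>f\<in>F. ennreal (P f) * expected_queries (qcarrier R (Suc 0)) (\<lambda>r. f (G f r)) (strat R))
        \<le> (\<Sum>f\<in>F. ennreal (P f * (80 * sqrt (N / tt f))))"
    proof (intro sum_mono)
      fix f assume f: "f \<in> F"
      show "ennreal (P f) * expected_queries (qcarrier R (Suc 0)) (\<lambda>r. f (G f r)) (strat R) \<le> ennreal (P f * (80 * sqrt (N / tt f)))"
      proof (cases "P f > 0")
        case True
        have "ennreal (P f) * expected_queries (qcarrier R (Suc 0)) (\<lambda>r. f (G f r)) (strat R)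
            \<le> ennreal (P f) * ennreal (80 * sqrt (N / tt f))"
          using main_f(2)[OF R, of "\<lambda>r. f (G f r)"] Pt[OF f True] by (intro mult_left_mono) (simp_all add: N_def tt_def)
        also have "\<dots> = ennreal (P f * (80 * sqrt (N / tt f)))" using True by (simp add: ennreal_mult')
        finally show ?thesis .
      next
        case False
        then have "P f = 0" using P0[OF f] by simp
        then show ?thesis by simp
      qed
    qed
    also have "\<dots> = ennreal (\<Sum>f\<in>F. P f * (80 * sqrt (N / tt f)))"
      using P0 by (intro sum_ennreal) (simp add: N_def tt_def)
    also have "\<dots> \<le> ennreal (80 * sqrt (\<Sum>f\<in>F. P f * real (card R) / real (card {r\<in>R. f (G f r)})))"
    proof (rule ennreal_leI)
      have "(\<Sum>f\<in>F. P f * (80 * sqrt (N / tt f))) = 80 * (\<Sum>f\<in>F. P f * sqrt (N / tt f))"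
        by (simp add: sum_distrib_left algebra_simps)
      also have "\<dots> \<le> 80 * sqrt (\<Sum>f\<in>F. P f * (N / tt f))"
        using sqrt_avg[OF F P0 _ P1, of "\<lambda>f. N / tt f"] by (simp add: N_def tt_def)
      also have "(\<Sum>f\<in>F. P f * (N / tt f)) = (\<Sum>f\<in>F. P f * real (card R) / real (card {r\<in>R. f (G f r)}))"
        by (simp add: N_def tt_def)
      finally show "(\<Sum>f\<in>F. P f * (80 * sqrt (N / tt f))) \<le> 80 * sqrt (\<Sum>f\<in>F. P f * real (card R) / real (card {r\<in>R. f (G f r)}))" .
    qed
    finally show "(\<Sum>f\<in>F. ennreal (P f) * expected_queries (qcarrier R (Suc 0)) (\<lambda>r. f (G f r)) (strat R))
          \<le> ennreal (80 * sqrt (\<Sum>f\<in>F. P f * real (card R) / real (card {r\<in>R. f (G f r)})))" .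
  qed
qed


end
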